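(* Let $\mathfrak{g}_4$ be the complex Lie algebra with basis $Z_1,\dots,Z_4$ and nonzero brackets $[Z_1,Z_2]=Z_3$, $[Z_1,Z_3]=Z_4$, $[Z_1,Z_4]=Z_2$. A Hermitian inner product on $\mathfrak{g}_4$ induces an expanding algebraic soliton to HCF on the corresponding simply connected complex Lie group if and only if it is homothetically equivalent to a Hermitian inner product $g$ on $\mathfrak{g}_4$ satisfying $g(Z_2,\bar Z_2)=g(Z_3,\bar Z_3)=g(Z_4,\bar Z_4)$ and $g(Z_2,\bar Z_3)=g(Z_2,\bar Z_4)=g(Z_3,\bar Z_4)=0$.
   Context: A Hermitian inner product on a complex Lie algebra induces a left-invariant Hermitian metric on the simply connected complex Lie group. The HCF tensor $K(g)$ of such a metric is $K(g)(Z,\bar W)=\mathrm{Ric}^{1,1}(Z,\bar W)+\tfrac12\operatorname{tr}\operatorname{ad}_Z\cdot\overline{\operatorname{tr}\operatorname{ad}_W}$, with $\mathrm{Ric}^{1,1}$ the $(1,1)$-part of the Ricci tensor of the underlying Riemannian metric; $K_g$ is defined by $g(K_gX,\bar Y)=K(g)(X,\bar Y)$. The metric is an expanding algebraic soliton to HCF if $K_g=c\,I+\tfrac12(D+D^t)$ with $c<0$, $D$ a derivation and its $g$-adjoint $D^t$ also a derivation. Two Hermitian inner products are homothetically equivalent if one is a positive multiple of the pull-back of the other by a Lie algebra automorphism. *)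

theory Defs
  imports "HOL-Analysis.Analysis"
begin

datatype idx4 = I1 | I2 | I3 | I4

lemma UNIV_idx4: "(UNIV :: idx4 set) = {I1, I2, I3, I4}"
  using idx4.exhaust by auto

instance idx4 :: finite
  by standard (simp add: UNIV_idx4)

text \<open>A complex Lie algebra structure on complex^n is given by its bracket.
  Vectors X :: complex^'n; basis vectors are axis k 1.\<close>

type_synonym 'n cvec = "complex ^ 'n"

text \<open>h X Y stands for g(X, conj Y): complex-linear in X, conjugate-linear in Y.\<close>

definition hermitian_ip :: "('n::finite cvec \<Rightarrow> 'n cvec \<Rightarrow> complex) \<Rightarrow> bool" where
  "hermitian_ip h \<longleftrightarrow>
     (\<forall>X Y Z. h (X + Y) Z = h X Z + h Y Z) \<and>
     (\<forall>a X Y. h (a *s X) Y = a * h X Y) \<and>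
     (\<forall>X Y. h Y X = cnj (h X Y)) \<and>
     (\<forall>X. X \<noteq> 0 \<longrightarrow> Re (h X X) > 0)"

text \<open>Real trace of a real-linear endomorphism of complex^n, computed in the real
  basis axis k 1, axis k i.\<close>

definition real_trace :: "('n::finite cvec \<Rightarrow> 'n cvec) \<Rightarrow> real" where
  "real_trace f = (\<Sum>k\<in>UNIV. Re ((f (axis k 1)) $ k) + Im ((f (axis k \<i>)) $ k))"

definition complex_trace :: "('n::finite cvec \<Rightarrow> 'n cvec) \<Rightarrow> complex" where
  "complex_trace f = (\<Sum>k\<in>UNIV. (f (axis k 1)) $ k)"

definition riem :: "('n::finite cvec \<Rightarrow> 'n cvec \<Rightarrow> complex) \<Rightarrow> 'n cvec \<Rightarrow> 'n cvec \<Rightarrow> real" where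
  "riem h X Y = Re (h X Y)"

text \<open>Levi-Civita connection on left-invariant vector fields (Koszul formula).\<close>

definition levi_civita ::
  "('n::finite cvec \<Rightarrow> 'n cvec \<Rightarrow> 'n cvec) \<Rightarrow> ('n cvec \<Rightarrow> 'n cvec \<Rightarrow> complex) \<Rightarrow> 'n cvec \<Rightarrow> 'n cvec \<Rightarrow> 'n cvec" where
  "levi_civita br h X Y = (THE W. \<forall>Z.
      2 * riem h W Z = riem h (br X Y) Z - riem h (br Y Z) X + riem h (br Z X) Y)"

definition curvature ::
  "('n::finite cvec \<Rightarrow> 'n cvec \<Rightarrow> 'n cvec) \<Rightarrow> ('n cvec \<Rightarrow> 'n cvec \<Rightarrow> complex) \<Rightarrow> 'n cvec \<Rightarrow> 'n cvec \<Rightarrow> 'n cvec \<Rightarrow> 'n cvec" where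
  "curvature br h X Y Z =
     levi_civita br h X (levi_civita br h Y Z) - levi_civita br h Y (levi_civita br h X Z)
     - levi_civita br h (br X Y) Z"

definition ricci ::
  "('n::finite cvec \<Rightarrow> 'n cvec \<Rightarrow> 'n cvec) \<Rightarrow> ('n cvec \<Rightarrow> 'n cvec \<Rightarrow> complex) \<Rightarrow> 'n cvec \<Rightarrow> 'n cvec \<Rightarrow> real" where
  "ricci br h Y Z = real_trace (\<lambda>X. curvature br h X Y Z)"

text \<open>(1,1)-part w.r.t. the complex structure J = multiplication by i.\<close>

definition ricci11 ::
  "('n::finite cvec \<Rightarrow> 'n cvec \<Rightarrow> 'n cvec) \<Rightarrow> ('n cvec \<Rightarrow> 'n cvec \<Rightarrow> complex) \<Rightarrow> 'n cvec \<Rightarrow> 'n cvec \<Rightarrow> real" where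
  "ricci11 br h X Y = (ricci br h X Y + ricci br h (\<i> *s X) (\<i> *s Y)) / 2"

text \<open>Sesquilinear form associated with a J-invariant real form T, with the same
  convention as g(X, conj Y) = <X,Y> + i <X,JY>.\<close>

definition hcf_tensor ::
  "('n::finite cvec \<Rightarrow> 'n cvec \<Rightarrow> 'n cvec) \<Rightarrow> ('n cvec \<Rightarrow> 'n cvec \<Rightarrow> complex) \<Rightarrow> 'n cvec \<Rightarrow> 'n cvec \<Rightarrow> complex" where
  "hcf_tensor br h X Y =
     complex_of_real (ricci11 br h X Y) + \<i> * complex_of_real (ricci11 br h X (\<i> *s Y))
     + (1/2) * complex_trace (br X) * cnj (complex_trace (br Y))"

definition hcf_operator ::
  "('n::finite cvec \<Rightarrow> 'n cvec \<Rightarrow> 'n cvec) \<Rightarrow> ('n cvec \<Rightarrow> 'n cvec \<Rightarrow> complex) \<Rightarrow> 'n cvec \<Rightarrow> 'n cvec" where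
  "hcf_operator br h = (THE T. \<forall>X Y. h (T X) Y = hcf_tensor br h X Y)"

definition h_adjoint ::
  "('n::finite cvec \<Rightarrow> 'n cvec \<Rightarrow> complex) \<Rightarrow> ('n cvec \<Rightarrow> 'n cvec) \<Rightarrow> 'n cvec \<Rightarrow> 'n cvec" where
  "h_adjoint h D = (THE E. \<forall>X Y. h (E X) Y = h X (D Y))"

definition complex_linear :: "('n::finite cvec \<Rightarrow> 'n cvec) \<Rightarrow> bool" where
  "complex_linear f \<longleftrightarrow> (\<forall>X Y. f (X + Y) = f X + f Y) \<and> (\<forall>a X. f (a *s X) = a *s f X)"

definition derivation :: "('n::finite cvec \<Rightarrow> 'n cvec \<Rightarrow> 'n cvec) \<Rightarrow> ('n cvec \<Rightarrow> 'n cvec) \<Rightarrow> bool" where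
  "derivation br D \<longleftrightarrow> complex_linear D \<and> (\<forall>X Y. D (br X Y) = br (D X) Y + br X (D Y))"

definition expanding_alg_soliton ::
  "('n::finite cvec \<Rightarrow> 'n cvec \<Rightarrow> 'n cvec) \<Rightarrow> ('n cvec \<Rightarrow> 'n cvec \<Rightarrow> complex) \<Rightarrow> bool" where
  "expanding_alg_soliton br h \<longleftrightarrow>
     (\<exists>c::real. \<exists>D. c < 0 \<and> derivation br D \<and> derivation br (h_adjoint h D) \<and>
        hcf_operator br h = (\<lambda>X. complex_of_real c *s X + (1/2 :: complex) *s (D X + h_adjoint h D X)))"

definition lie_automorphism :: "('n::finite cvec \<Rightarrow> 'n cvec \<Rightarrow> 'n cvec) \<Rightarrow> ('n cvec \<Rightarrow> 'n cvec) \<Rightarrow> bool" where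
  "lie_automorphism br \<phi> \<longleftrightarrow> bij \<phi> \<and> complex_linear \<phi> \<and> (\<forall>X Y. \<phi> (br X Y) = br (\<phi> X) (\<phi> Y))"

definition homothetically_equivalent ::
  "('n::finite cvec \<Rightarrow> 'n cvec \<Rightarrow> 'n cvec) \<Rightarrow> ('n cvec \<Rightarrow> 'n cvec \<Rightarrow> complex) \<Rightarrow> ('n cvec \<Rightarrow> 'n cvec \<Rightarrow> complex) \<Rightarrow> bool" where
  "homothetically_equivalent br h1 h2 \<longleftrightarrow>
     (\<exists>k::real. \<exists>\<phi>. k > 0 \<and> lie_automorphism br \<phi> \<and>
        (\<forall>X Y. h1 X Y = complex_of_real k * h2 (\<phi> X) (\<phi> Y)))"

text \<open>[Z1,Z2]=Z3, [Z1,Z3]=Z4, [Z1,Z4]=Z2, other brackets of basis vectors zero.\<close>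

definition br_g4 :: "idx4 cvec \<Rightarrow> idx4 cvec \<Rightarrow> idx4 cvec" where
  "br_g4 X Y = (\<chi> k. case k of
       I1 \<Rightarrow> 0
     | I2 \<Rightarrow> X$I1 * Y$I4 - X$I4 * Y$I1
     | I3 \<Rightarrow> X$I1 * Y$I2 - X$I2 * Y$I1
     | I4 \<Rightarrow> X$I1 * Y$I3 - X$I3 * Y$I1)"

definition Zb :: "idx4 \<Rightarrow> idx4 cvec" where
  "Zb k = axis k 1"

end

theory Submission
  imports Defs
begin


definition std :: "idx4 cvec \<Rightarrow> idx4 cvec \<Rightarrow> complex" where
  "std x y = x$I1 * cnj (y$I1) + x$I2 * cnj (y$I2) + x$I3 * cnj (y$I3) + x$I4 * cnj (y$I4)"

definition ipn :: "idx4 cvec \<Rightarrow> idx4 cvec \<Rightarrow> complex" where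
  "ipn x y = x$I2 * cnj (y$I2) + x$I3 * cnj (y$I3) + x$I4 * cnj (y$I4)"

definition Mv :: "(idx4 \<Rightarrow> idx4 \<Rightarrow> complex) \<Rightarrow> idx4 cvec \<Rightarrow> idx4 cvec" where
  "Mv m x = (\<chi> k. if k = I1 then 0 else m k I2 * x$I2 + m k I3 * x$I3 + m k I4 * x$I4)"

definition Mh :: "(idx4 \<Rightarrow> idx4 \<Rightarrow> complex) \<Rightarrow> idx4 cvec \<Rightarrow> idx4 cvec" where
  "Mh m x = (\<chi> k. if k = I1 then 0 else cnj (m I2 k) * x$I2 + cnj (m I3 k) * x$I3 + cnj (m I4 k) * x$I4)"

definition brM :: "(idx4 \<Rightarrow> idx4 \<Rightarrow> complex) \<Rightarrow> idx4 cvec \<Rightarrow> idx4 cvec \<Rightarrow> idx4 cvec" where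
  "brM m x y = (\<chi> k. if k = I1 then 0 else
      x$I1 * (m k I2 * y$I2 + m k I3 * y$I3 + m k I4 * y$I4)
    - y$I1 * (m k I2 * x$I2 + m k I3 * x$I3 + m k I4 * x$I4))"

lemma forall_idx4: "(\<forall>k::idx4. P k) \<longleftrightarrow> P I1 \<and> P I2 \<and> P I3 \<and> P I4"
  by (metis idx4.exhaust)

lemma vec_eq_idx4: "(x::'a^idx4) = y \<longleftrightarrow> x$I1 = y$I1 \<and> x$I2 = y$I2 \<and> x$I3 = y$I3 \<and> x$I4 = y$I4"
  by (simp add: vec_eq_iff forall_idx4)


definition adjM :: "(idx4 \<Rightarrow> idx4 \<Rightarrow> complex) \<Rightarrow> idx4 cvec \<Rightarrow> idx4 cvec \<Rightarrow> idx4 cvec" where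
  "adjM m x y = (\<chi> k. if k = I1 then - ipn y (Mv m x) else cnj (x$I1) * (Mh m y $ k))"

lemma std_add_left: "std (a + b) c = std a c + std b c"
  by (simp add: std_def algebra_simps)
lemma std_diff_left: "std (a - b) c = std a c - std b c"
  by (simp add: std_def algebra_simps)
lemma std_scale_left: "std (s *s a) c = s * std a c"
  by (simp add: std_def algebra_simps)
lemma std_cnj: "std b a = cnj (std a b)"
  by (simp add: std_def)
lemma std_add_right: "std c (a + b) = std c a + std c b"
  by (simp add: std_def algebra_simps)
lemma std_diff_right: "std c (a - b) = std c a - std c b"
  by (simp add: std_def algebra_simps)
lemma std_scale_right: "std a (s *s c) = cnj s * std a c"
  by (simp add: std_def algebra_simps)

lemma brM_antisym: "brM m y x = - brM m x y"
  by (simp add: brM_def vec_eq_idx4 algebra_simps)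

lemma adjM_std: "std (adjM m x y) z = std y (brM m x z)"
  unfolding std_def adjM_def brM_def ipn_def Mv_def Mh_def
  by (simp add: algebra_simps)

definition LCf :: "(idx4 \<Rightarrow> idx4 \<Rightarrow> complex) \<Rightarrow> idx4 cvec \<Rightarrow> idx4 cvec \<Rightarrow> idx4 cvec" where
  "LCf m x y = (1/2) *s (brM m x y - adjM m x y - adjM m y x)"

lemma koszul_LCf:
  "2 * Re (std (LCf m x y) z) = Re (std (brM m x y) z) - Re (std (brM m y z) x) + Re (std (brM m z x) y)"
proof -
  have "2 * std (LCf m x y) z = std (brM m x y) z - std (adjM m x y) z - std (adjM m y x) z"
    by (simp add: LCf_def std_scale_left std_diff_left)
  also have "\<dots> = std (brM m x y) z - std y (brM m x z) - std x (brM m y z)"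
    by (simp add: adjM_std)
  finally have e: "2 * std (LCf m x y) z = std (brM m x y) z - std y (brM m x z) - std x (brM m y z)" .
  have "2 * Re (std (LCf m x y) z) = Re (2 * std (LCf m x y) z)" by simp
  also have "\<dots> = Re (std (brM m x y) z) - Re (std y (brM m x z)) - Re (std x (brM m y z))"
    using e by simp
  also have "\<dots> = Re (std (brM m x y) z) - Re (std (brM m x z) y) - Re (std (brM m y z) x)"
    by (metis std_cnj cnj.sel(1))
  finally show ?thesis
    using brM_antisym[of m x z] by (simp add: std_def algebra_simps)
qed




lemma herm_diff_left:
  assumes "hermitian_ip h" shows "h (a - b) c = h a c - h b c"
proof -
  have "h ((a - b) + b) c = h (a - b) c + h b c" using assms unfolding hermitian_ip_def by blast
  then have "h a c = h (a - b) c + h b c" by (metis diff_add_cancel)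
  then show ?thesis by (metis add_diff_cancel)
qed

lemma herm_zero_iff:
  assumes "hermitian_ip h" and "Re (h v v) = 0" shows "v = 0"
proof (rule ccontr)
  assume "v \<noteq> 0"
  then have "Re (h v v) > 0" using assms(1) unfolding hermitian_ip_def by blast
  then show False using assms(2) by simp
qed

lemma levi_civita_eqI:
  assumes h: "hermitian_ip h"
    and W: "\<forall>Z. 2 * riem h W Z = riem h (br X Y) Z - riem h (br Y Z) X + riem h (br Z X) Y"
  shows "levi_civita br h X Y = W"
  unfolding levi_civita_def
proof (rule the_equality)
  fix W' assume W': "\<forall>Z. 2 * riem h W' Z = riem h (br X Y) Z - riem h (br Y Z) X + riem h (br Z X) Y"
  have "Re (h (W' - W) (W' - W)) = 0"
    using W[rule_format, of "W' - W"] W'[rule_format, of "W' - W"]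
    by (simp add: herm_diff_left[OF h] riem_def)
  then have "W' - W = 0" by (rule herm_zero_iff[OF h])
  then show "W' = W" by simp
qed (rule W)

lemma hermitian_std: "hermitian_ip std"
  unfolding hermitian_ip_def
proof (intro conjI allI impI)
  fix X :: "idx4 cvec" assume "X \<noteq> 0"
  then obtain k where "X$k \<noteq> 0" by (metis vec_eq_iff zero_index)
  have "Re (std X X) = (cmod (X$I1))^2 + (cmod (X$I2))^2 + (cmod (X$I3))^2 + (cmod (X$I4))^2"
    by (simp add: std_def complex_mult_cnj cmod_def)
  moreover have "(cmod (X$k))^2 > 0" using \<open>X$k \<noteq> 0\<close> by simp
  moreover have "(cmod (X$I1))^2 + (cmod (X$I2))^2 + (cmod (X$I3))^2 + (cmod (X$I4))^2 \<ge> (cmod (X$k))^2"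
    by (cases k) auto
  ultimately show "Re (std X X) > 0" by linarith
qed (auto simp: std_def algebra_simps)

lemma LC_brM: "levi_civita (brM m) std = LCf m"
  by (intro ext levi_civita_eqI hermitian_std) (simp add: riem_def koszul_LCf)




lemma real_trace_alt: "real_trace f = Re (\<Sum>k\<in>UNIV. f (axis k 1) $ k - \<i> * f (axis k \<i>) $ k)"
  unfolding real_trace_def by (simp add: Re_sum)

lemma sum_idx4: "(\<Sum>k\<in>UNIV. f k) = f I1 + f I2 + f I3 + f I4"
  by (simp add: UNIV_idx4 add.assoc)

lemma axis_nth_idx4: "axis k a $ j = (if j = k then a else 0)"
  by (simp add: axis_def)

lemmas comp_simps = LCf_def brM_def adjM_def Mv_def Mh_def ipn_def axis_nth_idx4

definition curvM where "curvM m x y z = LCf m x (LCf m y z) - LCf m y (LCf m x z) - LCf m (brM m x y) z"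

lemma curv_brM: "curvature (brM m) std = curvM m"
  by (intro ext) (simp add: curvature_def LC_brM curvM_def)

definition Cr where "Cr m y z = (\<Sum>k\<in>UNIV. curvM m (axis k 1) y z $ k - \<i> * curvM m (axis k \<i>) y z $ k)"

lemma ricci_brM: "ricci (brM m) std y z = Re (Cr m y z)"
  by (simp add: ricci_def real_trace_alt curv_brM Cr_def)


definition trM where "trM m = m I2 I2 + m I3 I3 + m I4 I4"
definition Nm where "Nm m k j = (m k I2 * cnj (m j I2) + m k I3 * cnj (m j I3) + m k I4 * cnj (m j I4))
   - (cnj (m I2 k) * m I2 j + cnj (m I3 k) * m I3 j + cnj (m I4 k) * m I4 j)
   - trM m * cnj (m j k) - cnj (trM m) * m k j"
definition kap where "kap m = - (\<Sum>k\<in>{I2,I3,I4}. \<Sum>j\<in>{I2,I3,I4}. m k j * cnj (m k j)) + trM m * cnj (trM m) / 2"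
definition Kop where "Kop m x = (\<chi> k. if k = I1 then kap m * x$I1 else Nm m k I2 * x$I2 + Nm m k I3 * x$I3 + Nm m k I4 * x$I4)"

lemma of_real_Re: "complex_of_real (Re z) = (z + cnj z) / 2"
  by (simp add: complex_add_cnj)

lemma i_left: "\<i> * (\<i> * x) = - x" by (simp add: mult.assoc[symmetric])

lemma hcf_I1_I1: "hcf_tensor (brM m) std (axis I1 1) (axis I1 1) = Kop m (axis I1 1) $ I1"
  unfolding hcf_tensor_def ricci11_def ricci_brM complex_trace_def
  apply (simp only: of_real_add of_real_divide of_real_Re)
  apply (simp add: Cr_def sum_idx4 curvM_def comp_simps Kop_def kap_def trM_def Nm_def)
  apply (simp add: field_simps algebra_simps i_left)?
  done

lemma hcf_I1_I2: "hcf_tensor (brM m) std (axis I1 1) (axis I2 1) = Kop m (axis I1 1) $ I2"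
  unfolding hcf_tensor_def ricci11_def ricci_brM complex_trace_def
  apply (simp only: of_real_add of_real_divide of_real_Re)
  apply (simp add: Cr_def sum_idx4 curvM_def comp_simps Kop_def kap_def trM_def Nm_def)
  apply (simp add: field_simps algebra_simps i_left)?
  done

lemma hcf_I1_I3: "hcf_tensor (brM m) std (axis I1 1) (axis I3 1) = Kop m (axis I1 1) $ I3"
  unfolding hcf_tensor_def ricci11_def ricci_brM complex_trace_def
  apply (simp only: of_real_add of_real_divide of_real_Re)
  apply (simp add: Cr_def sum_idx4 curvM_def comp_simps Kop_def kap_def trM_def Nm_def)
  apply (simp add: field_simps algebra_simps i_left)?
  done

lemma hcf_I1_I4: "hcf_tensor (brM m) std (axis I1 1) (axis I4 1) = Kop m (axis I1 1) $ I4"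
  unfolding hcf_tensor_def ricci11_def ricci_brM complex_trace_def
  apply (simp only: of_real_add of_real_divide of_real_Re)
  apply (simp add: Cr_def sum_idx4 curvM_def comp_simps Kop_def kap_def trM_def Nm_def)
  apply (simp add: field_simps algebra_simps i_left)?
  done

lemma hcf_I2_I1: "hcf_tensor (brM m) std (axis I2 1) (axis I1 1) = Kop m (axis I2 1) $ I1"
  unfolding hcf_tensor_def ricci11_def ricci_brM complex_trace_def
  apply (simp only: of_real_add of_real_divide of_real_Re)
  apply (simp add: Cr_def sum_idx4 curvM_def comp_simps Kop_def kap_def trM_def Nm_def)
  apply (simp add: field_simps algebra_simps i_left)?
  done

lemma hcf_I2_I2: "hcf_tensor (brM m) std (axis I2 1) (axis I2 1) = Kop m (axis I2 1) $ I2"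
  unfolding hcf_tensor_def ricci11_def ricci_brM complex_trace_def
  apply (simp only: of_real_add of_real_divide of_real_Re)
  apply (simp add: Cr_def sum_idx4 curvM_def comp_simps Kop_def kap_def trM_def Nm_def)
  apply (simp add: field_simps algebra_simps i_left)?
  done

lemma hcf_I2_I3: "hcf_tensor (brM m) std (axis I2 1) (axis I3 1) = Kop m (axis I2 1) $ I3"
  unfolding hcf_tensor_def ricci11_def ricci_brM complex_trace_def
  apply (simp only: of_real_add of_real_divide of_real_Re)
  apply (simp add: Cr_def sum_idx4 curvM_def comp_simps Kop_def kap_def trM_def Nm_def)
  apply (simp add: field_simps algebra_simps i_left)?
  done

lemma hcf_I2_I4: "hcf_tensor (brM m) std (axis I2 1) (axis I4 1) = Kop m (axis I2 1) $ I4"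
  unfolding hcf_tensor_def ricci11_def ricci_brM complex_trace_def
  apply (simp only: of_real_add of_real_divide of_real_Re)
  apply (simp add: Cr_def sum_idx4 curvM_def comp_simps Kop_def kap_def trM_def Nm_def)
  apply (simp add: field_simps algebra_simps i_left)?
  done

lemma hcf_I3_I1: "hcf_tensor (brM m) std (axis I3 1) (axis I1 1) = Kop m (axis I3 1) $ I1"
  unfolding hcf_tensor_def ricci11_def ricci_brM complex_trace_def
  apply (simp only: of_real_add of_real_divide of_real_Re)
  apply (simp add: Cr_def sum_idx4 curvM_def comp_simps Kop_def kap_def trM_def Nm_def)
  apply (simp add: field_simps algebra_simps i_left)?
  done

lemma hcf_I3_I2: "hcf_tensor (brM m) std (axis I3 1) (axis I2 1) = Kop m (axis I3 1) $ I2"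
  unfolding hcf_tensor_def ricci11_def ricci_brM complex_trace_def
  apply (simp only: of_real_add of_real_divide of_real_Re)
  apply (simp add: Cr_def sum_idx4 curvM_def comp_simps Kop_def kap_def trM_def Nm_def)
  apply (simp add: field_simps algebra_simps i_left)?
  done

lemma hcf_I3_I3: "hcf_tensor (brM m) std (axis I3 1) (axis I3 1) = Kop m (axis I3 1) $ I3"
  unfolding hcf_tensor_def ricci11_def ricci_brM complex_trace_def
  apply (simp only: of_real_add of_real_divide of_real_Re)
  apply (simp add: Cr_def sum_idx4 curvM_def comp_simps Kop_def kap_def trM_def Nm_def)
  apply (simp add: field_simps algebra_simps i_left)?
  done

lemma hcf_I3_I4: "hcf_tensor (brM m) std (axis I3 1) (axis I4 1) = Kop m (axis I3 1) $ I4"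
  unfolding hcf_tensor_def ricci11_def ricci_brM complex_trace_def
  apply (simp only: of_real_add of_real_divide of_real_Re)
  apply (simp add: Cr_def sum_idx4 curvM_def comp_simps Kop_def kap_def trM_def Nm_def)
  apply (simp add: field_simps algebra_simps i_left)?
  done

lemma hcf_I4_I1: "hcf_tensor (brM m) std (axis I4 1) (axis I1 1) = Kop m (axis I4 1) $ I1"
  unfolding hcf_tensor_def ricci11_def ricci_brM complex_trace_def
  apply (simp only: of_real_add of_real_divide of_real_Re)
  apply (simp add: Cr_def sum_idx4 curvM_def comp_simps Kop_def kap_def trM_def Nm_def)
  apply (simp add: field_simps algebra_simps i_left)?
  done

lemma hcf_I4_I2: "hcf_tensor (brM m) std (axis I4 1) (axis I2 1) = Kop m (axis I4 1) $ I2"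
  unfolding hcf_tensor_def ricci11_def ricci_brM complex_trace_def
  apply (simp only: of_real_add of_real_divide of_real_Re)
  apply (simp add: Cr_def sum_idx4 curvM_def comp_simps Kop_def kap_def trM_def Nm_def)
  apply (simp add: field_simps algebra_simps i_left)?
  done

lemma hcf_I4_I3: "hcf_tensor (brM m) std (axis I4 1) (axis I3 1) = Kop m (axis I4 1) $ I3"
  unfolding hcf_tensor_def ricci11_def ricci_brM complex_trace_def
  apply (simp only: of_real_add of_real_divide of_real_Re)
  apply (simp add: Cr_def sum_idx4 curvM_def comp_simps Kop_def kap_def trM_def Nm_def)
  apply (simp add: field_simps algebra_simps i_left)?
  done

lemma hcf_I4_I4: "hcf_tensor (brM m) std (axis I4 1) (axis I4 1) = Kop m (axis I4 1) $ I4"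
  unfolding hcf_tensor_def ricci11_def ricci_brM complex_trace_def
  apply (simp only: of_real_add of_real_divide of_real_Re)
  apply (simp add: Cr_def sum_idx4 curvM_def comp_simps Kop_def kap_def trM_def Nm_def)
  apply (simp add: field_simps algebra_simps i_left)?
  done




lemma vec_scaleR_nth: "((r::real) *\<^sub>R (x::idx4 cvec))$k = complex_of_real r * x$k"
  unfolding vector_scaleR_component by (rule scaleR_conv_of_real)

lemmas vsimps = comp_simps vec_eq_idx4 vec_scaleR_nth

lemma LCf_add1: "LCf m (x + x') y = LCf m x y + LCf m x' y"
  by (simp add: vsimps algebra_simps)
lemma LCf_add2: "LCf m x (y + y') = LCf m x y + LCf m x y'"
  by (simp add: vsimps algebra_simps)
lemma LCf_scale1: "LCf m (r *\<^sub>R x) y = r *\<^sub>R LCf m x y"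
  by (simp add: vsimps algebra_simps)
lemma LCf_scale2: "LCf m x (r *\<^sub>R y) = r *\<^sub>R LCf m x y"
  by (simp add: vsimps algebra_simps)
lemma brM_add1: "brM m (x + x') y = brM m x y + brM m x' y"
  by (simp add: vsimps algebra_simps)
lemma brM_add2: "brM m x (y + y') = brM m x y + brM m x y'"
  by (simp add: vsimps algebra_simps)
lemma brM_scale1: "brM m (c *s x) y = c *s brM m x y"
  by (simp add: vsimps algebra_simps)
lemma brM_scale2: "brM m x (c *s y) = c *s brM m x y"
  by (simp add: vsimps algebra_simps)
lemma brM_scaleR2: "brM m x (r *\<^sub>R y) = r *\<^sub>R brM m x y"
  by (simp add: vsimps algebra_simps)

lemma curvM_add2: "curvM m x (y + y') z = curvM m x y z + curvM m x y' z"
  by (simp add: curvM_def LCf_add1 LCf_add2 brM_add2 algebra_simps)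
lemma curvM_add3: "curvM m x y (z + z') = curvM m x y z + curvM m x y z'"
  by (simp add: curvM_def LCf_add1 LCf_add2 brM_add2 algebra_simps)
lemma curvM_scale2: "curvM m x (r *\<^sub>R y) z = r *\<^sub>R curvM m x y z"
  by (simp add: curvM_def LCf_scale1 LCf_scale2 brM_scaleR2 algebra_simps)
lemma curvM_scale3: "curvM m x y (r *\<^sub>R z) = r *\<^sub>R curvM m x y z"
  by (simp add: curvM_def LCf_scale1 LCf_scale2 brM_scaleR2 algebra_simps)

lemma Cr_add1: "Cr m (y + y') z = Cr m y z + Cr m y' z"
  by (simp add: Cr_def curvM_add2 sum.distrib[symmetric] algebra_simps)
lemma Cr_add2: "Cr m y (z + z') = Cr m y z + Cr m y z'"
  by (simp add: Cr_def curvM_add3 sum.distrib[symmetric] algebra_simps)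
lemma Cr_scale1: "Cr m (r *\<^sub>R y) z = of_real r * Cr m y z"
  by (simp only: Cr_def curvM_scale2 vec_scaleR_nth sum_distrib_left) (simp add: algebra_simps)
lemma Cr_scale2: "Cr m y (r *\<^sub>R z) = of_real r * Cr m y z"
  by (simp only: Cr_def curvM_scale3 vec_scaleR_nth sum_distrib_left) (simp add: algebra_simps)

abbreviation "RR m x y \<equiv> ricci (brM m) std x y"

lemma RR_add1: "RR m (y + y') z = RR m y z + RR m y' z"
  by (simp add: ricci_brM Cr_add1)
lemma RR_add2: "RR m y (z + z') = RR m y z + RR m y z'"
  by (simp add: ricci_brM Cr_add2)
lemma RR_scale1: "RR m (r *\<^sub>R y) z = r * RR m y z"
  by (simp add: ricci_brM Cr_scale1)
lemma RR_scale2: "RR m y (r *\<^sub>R z) = r * RR m y z"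
  by (simp add: ricci_brM Cr_scale2)
lemma RR_neg1: "RR m (- y) z = - RR m y z"
  using RR_scale1[of m "-1" y z] by simp
lemma RR_neg2: "RR m y (- z) = - RR m y z"
  using RR_scale2[of m y "-1" z] by simp

lemma ii_s: "\<i> *s (\<i> *s x) = - (x :: idx4 cvec)"
  by (simp add: vec_eq_idx4 mult.assoc[symmetric])
lemma is_add: "\<i> *s (x + y) = \<i> *s x + \<i> *s (y :: idx4 cvec)"
  by (simp add: vec_eq_idx4 algebra_simps)
lemma is_scaleR: "\<i> *s (r *\<^sub>R x) = r *\<^sub>R (\<i> *s (x :: idx4 cvec))"
  by (simp add: vec_eq_idx4 scaleR_conv_of_real algebra_simps)

lemma ct_brM: "complex_trace (brM m x) = x$I1 * trM m"
  by (simp add: complex_trace_def sum_idx4 comp_simps trM_def algebra_simps)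

abbreviation "HH m x y \<equiv> hcf_tensor (brM m) std x y"

lemma HH_alt: "HH m x y = of_real ((RR m x y + RR m (\<i> *s x) (\<i> *s y)) / 2)
   + \<i> * of_real ((RR m x (\<i> *s y) - RR m (\<i> *s x) y) / 2)
   + 1/2 * (x$I1 * trM m) * cnj (y$I1 * trM m)"
  by (simp add: hcf_tensor_def ricci11_def ct_brM ii_s RR_neg2)

lemma HH_add1: "HH m (x + x') y = HH m x y + HH m x' y"
  unfolding HH_alt is_add RR_add1 by (simp add: add_divide_distrib diff_divide_distrib algebra_simps)
lemma HH_add2: "HH m x (y + y') = HH m x y + HH m x y'"
  unfolding HH_alt is_add RR_add2 by (simp add: add_divide_distrib diff_divide_distrib algebra_simps)
lemma HH_scaleR1: "HH m (r *\<^sub>R x) y = of_real r * HH m x y"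
  unfolding HH_alt is_scaleR RR_scale1 vec_scaleR_nth by (simp add: algebra_simps scaleR_conv_of_real)
lemma HH_scaleR2: "HH m x (r *\<^sub>R y) = of_real r * HH m x y"
  unfolding HH_alt is_scaleR RR_scale2 vec_scaleR_nth by (simp add: algebra_simps scaleR_conv_of_real)
lemma HH_i1: "HH m (\<i> *s x) y = \<i> * HH m x y"
  unfolding HH_alt ii_s RR_neg1 RR_neg2 by (simp add: algebra_simps i_left)
lemma HH_i2: "HH m x (\<i> *s y) = - \<i> * HH m x y"
  unfolding HH_alt ii_s RR_neg1 RR_neg2 by (simp add: algebra_simps i_left)

lemma cscale_split: "c *s x = Re c *\<^sub>R x + Im c *\<^sub>R (\<i> *s (x :: idx4 cvec))"
  by (simp add: vec_eq_idx4 vec_scaleR_nth complex_eq_iff)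

lemma HH_scale1: "HH m (c *s x) y = c * HH m x y"
proof -
  have "HH m (c *s x) y = of_real (Re c) * HH m x y + of_real (Im c) * (\<i> * HH m x y)"
    by (simp add: cscale_split[of c x] HH_add1 HH_scaleR1 HH_i1)
  also have "\<dots> = c * HH m x y"
    by (simp add: complex_eq_iff)
  finally show ?thesis .
qed

lemma HH_scale2: "HH m x (c *s y) = cnj c * HH m x y"
proof -
  have "HH m x (c *s y) = of_real (Re c) * HH m x y + of_real (Im c) * (- \<i> * HH m x y)"
    by (simp add: cscale_split[of c y] HH_add2 HH_scaleR2 HH_i2)
  also have "\<dots> = cnj c * HH m x y"
    by (simp add: complex_eq_iff)
  finally show ?thesis .
qed

lemma vec_decomp: "(x :: idx4 cvec) = x$I1 *s axis I1 1 + x$I2 *s axis I2 1 + x$I3 *s axis I3 1 + x$I4 *s axis I4 1"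
  by (simp add: vec_eq_idx4 axis_nth_idx4)

lemma HH_std: "HH m x y = std (Kop m x) y"
proof -
  have "HH m x y = HH m (x$I1 *s axis I1 1 + x$I2 *s axis I2 1 + x$I3 *s axis I3 1 + x$I4 *s axis I4 1)
     (y$I1 *s axis I1 1 + y$I2 *s axis I2 1 + y$I3 *s axis I3 1 + y$I4 *s axis I4 1)"
    using vec_decomp[of x] vec_decomp[of y] by simp
  also have "\<dots> = std (Kop m x) y"
    unfolding HH_add1 HH_add2 HH_scale1 HH_scale2
      hcf_I1_I1 hcf_I1_I2 hcf_I1_I3 hcf_I1_I4 hcf_I2_I1 hcf_I2_I2 hcf_I2_I3 hcf_I2_I4
      hcf_I3_I1 hcf_I3_I2 hcf_I3_I3 hcf_I3_I4 hcf_I4_I1 hcf_I4_I2 hcf_I4_I3 hcf_I4_I4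
    by (simp add: Kop_def std_def axis_nth_idx4 algebra_simps)
  finally show ?thesis .
qed

lemma std_eqI: "(\<And>y. std a y = std b y) \<Longrightarrow> a = b"
proof -
  assume H: "\<And>y. std a y = std b y"
  have "std (a - b) (a - b) = 0" using H[of "a - b"] by (simp add: std_diff_left)
  then have "Re (std (a - b) (a - b)) = 0" by simp
  then have "a - b = 0" by (rule herm_zero_iff[OF hermitian_std])
  then show ?thesis by simp
qed

lemma hcf_operator_brM: "hcf_operator (brM m) std = Kop m"
  unfolding hcf_operator_def
proof (rule the_equality)
  show "\<forall>X Y. std (Kop m X) Y = HH m X Y" by (simp add: HH_std)
next
  fix T assume "\<forall>X Y. std (T X) Y = HH m X Y"
  then show "T = Kop m" by (intro ext std_eqI) (simp add: HH_std)
qed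




definition np :: "idx4 cvec \<Rightarrow> idx4 cvec" where
  "np x = (\<chi> k. if k = I1 then 0 else x$k)"

abbreviation "e1 \<equiv> (axis I1 1 :: idx4 cvec)"

lemmas vs = vsimps np_def

lemma Mv_I1 [simp]: "Mv m x $ I1 = 0" by (simp add: Mv_def)
lemma Mh_I1 [simp]: "Mh m x $ I1 = 0" by (simp add: Mh_def)
lemma brM_I1 [simp]: "brM m x y $ I1 = 0" by (simp add: brM_def)
lemma Mv_np [simp]: "Mv m (np x) = Mv m x" by (simp add: vs)
lemma Mh_np [simp]: "Mh m (np x) = Mh m x" by (simp add: vs)
lemma np_Mv [simp]: "np (Mv m x) = Mv m x" by (simp add: vs)
lemma np_Mh [simp]: "np (Mh m x) = Mh m x" by (simp add: vs)
lemma np_id: "x$I1 = 0 \<Longrightarrow> np x = x" by (simp add: vs)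
lemma Mv_add: "Mv m (x + y) = Mv m x + Mv m y" by (simp add: vs algebra_simps)
lemma Mv_diff: "Mv m (x - y) = Mv m x - Mv m y" by (simp add: vs algebra_simps)
lemma Mv_scale: "Mv m (c *s x) = c *s Mv m x" by (simp add: vs algebra_simps)
lemma Mh_add: "Mh m (x + y) = Mh m x + Mh m y" by (simp add: vs algebra_simps)
lemma Mh_diff: "Mh m (x - y) = Mh m x - Mh m y" by (simp add: vs algebra_simps)
lemma Mh_scale: "Mh m (c *s x) = c *s Mh m x" by (simp add: vs algebra_simps)
lemma Mv_e1 [simp]: "Mv m e1 = 0" by (simp add: vs)
lemma std_Mv: "std (Mv m x) y = std x (Mh m y)" by (simp add: vs std_def algebra_simps)
lemma brM_alt: "brM m x y = x$I1 *s Mv m y - y$I1 *s Mv m x" by (simp add: vs algebra_simps)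
lemma brM_e1: "brM m e1 y = Mv m y" by (simp add: brM_alt)
lemma std_e1: "std x e1 = x$I1" by (simp add: std_def axis_nth_idx4)
lemma std_axis: "std x (axis k 1) = x$k" by (cases k) (simp_all add: std_def axis_nth_idx4)

lemma Kop_alt: "Kop m x = (kap m * x$I1) *s e1 + (Mv m (Mh m x) - Mh m (Mv m x) - trM m *s Mh m x - cnj (trM m) *s Mv m x)"
  by (simp add: vs Kop_def Nm_def algebra_simps)

lemma kap_alt: "kap m = - (Mh m (Mv m (axis I2 1)) $ I2 + Mh m (Mv m (axis I3 1)) $ I3 + Mh m (Mv m (axis I4 1)) $ I4)
   + trM m * cnj (trM m) / 2"
  by (simp add: vs kap_def algebra_simps)

lemma cl_add: "complex_linear D \<Longrightarrow> D (x + y) = D x + D y" unfolding complex_linear_def by blast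
lemma cl_scale: "complex_linear D \<Longrightarrow> D (c *s x) = c *s D x" unfolding complex_linear_def by blast
lemma cl_zero: "complex_linear D \<Longrightarrow> D 0 = 0" using cl_scale[of D 0 0] by simp
lemma cl_diff: "complex_linear D \<Longrightarrow> D (x - y) = D x - D y"
  using cl_add[of D "x - y" y] by (simp add: algebra_simps)

locale cubeM =
  fixes m :: "idx4 \<Rightarrow> idx4 \<Rightarrow> complex" and lam :: complex
  assumes tr0: "trM m = 0" and lam0: "lam \<noteq> 0"
    and cube: "\<And>x. Mv m (Mv m (Mv m x)) = lam *s np x"
begin

lemma n_as_bracket: "w$I1 = 0 \<Longrightarrow> w = brM m e1 (inverse lam *s Mv m (Mv m w))"
  by (simp add: brM_e1 Mv_scale cube np_id lam0)

lemma der_n: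
  assumes D: "derivation (brM m) D" and w: "w$I1 = 0"
  shows "D w $ I1 = 0"
proof -
  have "D w = D (brM m e1 (inverse lam *s Mv m (Mv m w)))" using n_as_bracket[OF w] by simp
  also have "\<dots> = brM m (D e1) (inverse lam *s Mv m (Mv m w)) + brM m e1 (D (inverse lam *s Mv m (Mv m w)))"
    using D unfolding derivation_def by blast
  finally show ?thesis by simp
qed

lemma der_step:
  assumes D: "derivation (brM m) D" and u: "u$I1 = 0"
  shows "D (Mv m u) = (D e1 $ I1) *s Mv m u + Mv m (D u)"
proof -
  have "D (Mv m u) = D (brM m e1 u)" by (simp add: brM_e1)
  also have "\<dots> = brM m (D e1) u + brM m e1 (D u)" using D unfolding derivation_def by blast
  finally show ?thesis using u by (simp add: brM_alt)
qed

lemma der_a0: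
  assumes D: "derivation (brM m) D"
  shows "D e1 $ I1 = 0"
proof -
  define a where "a = D e1 $ I1"
  define u where "u = (axis I2 1 :: idx4 cvec)"
  have u1: "u$I1 = 0" by (simp add: u_def axis_nth_idx4)
  have cl: "complex_linear D" using D unfolding derivation_def by blast
  have s1: "D (Mv m u) = a *s Mv m u + Mv m (D u)" using der_step[OF D u1] by (simp add: a_def)
  have s2: "D (Mv m (Mv m u)) = a *s Mv m (Mv m u) + Mv m (D (Mv m u))"
    using der_step[OF D, of "Mv m u"] by (simp add: a_def)
  have s3: "D (Mv m (Mv m (Mv m u))) = a *s Mv m (Mv m (Mv m u)) + Mv m (D (Mv m (Mv m u)))"
    using der_step[OF D, of "Mv m (Mv m u)"] by (simp add: a_def)
  have Du: "D u $ I1 = 0" using der_n[OF D u1] .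
  have "D (Mv m (Mv m (Mv m u))) = a *s Mv m (Mv m (Mv m u)) + (a *s Mv m (Mv m (Mv m u)) + (a *s Mv m (Mv m (Mv m u)) + Mv m (Mv m (Mv m (D u)))))"
    unfolding s3 s2 s1 Mv_add Mv_scale by (simp only: add.assoc)
  then have "D (lam *s u) = a *s (lam *s u) + (a *s (lam *s u) + (a *s (lam *s u) + lam *s D u))"
    using cube[of u] cube[of "D u"] np_id[OF u1] np_id[OF Du] by simp
  then have "lam *s D u = a *s (lam *s u) + (a *s (lam *s u) + (a *s (lam *s u) + lam *s D u))"
    using cl_scale[OF cl] by simp
  then have "(lam *s D u) $ I2 = (a *s (lam *s u) + (a *s (lam *s u) + (a *s (lam *s u) + lam *s D u))) $ I2"
    by simp
  then have "3 * a * lam = 0" by (simp add: u_def axis_nth_idx4 algebra_simps)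
  then show ?thesis using lam0 by (simp add: a_def)
qed

lemma der_comm:
  assumes D: "derivation (brM m) D" and u: "u$I1 = 0"
  shows "D (Mv m u) = Mv m (D u)"
  using der_step[OF D u] der_a0[OF D] by simp

end

lemma h_adjoint_eqI:
  assumes "\<forall>X Y. std (E X) Y = std X (D Y)"
  shows "h_adjoint std D = E"
  unfolding h_adjoint_def
proof (rule the_equality)
  show "\<forall>X Y. std (E X) Y = std X (D Y)" by (rule assms)
next
  fix E' assume "\<forall>X Y. std (E' X) Y = std X (D Y)"
  then show "E' = E" using assms by (intro ext std_eqI) simp
qed

lemma cl_decomp:
  assumes "complex_linear D"
  shows "D Y = Y$I1 *s D (axis I1 1) + Y$I2 *s D (axis I2 1) + Y$I3 *s D (axis I3 1) + Y$I4 *s D (axis I4 1)"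
proof -
  have "D Y = D (Y$I1 *s axis I1 1 + Y$I2 *s axis I2 1 + Y$I3 *s axis I3 1 + Y$I4 *s axis I4 1)"
    using vec_decomp[of Y] by simp
  then show ?thesis by (simp add: cl_add[OF assms] cl_scale[OF assms])
qed

lemma h_adjoint_std:
  assumes D: "complex_linear D"
  shows "std (h_adjoint std D X) Y = std X (D Y)"
proof -
  define E where "E X = (\<chi> k. X$I1 * cnj (D (axis k 1) $ I1) + X$I2 * cnj (D (axis k 1) $ I2)
      + X$I3 * cnj (D (axis k 1) $ I3) + X$I4 * cnj (D (axis k 1) $ I4))" for X
  have "\<forall>X Y. std (E X) Y = std X (D Y)"
  proof (intro allI)
    fix X Y
    show "std (E X) Y = std X (D Y)"
      by (subst cl_decomp[OF D, of Y]) (simp add: E_def std_def algebra_simps)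
  qed
  then show ?thesis using h_adjoint_eqI by simp
qed

context cubeM
begin

lemma der_e1:
  assumes D: "derivation (brM m) D" and E: "derivation (brM m) E"
    and adj: "\<And>X Y. std (E X) Y = std X (D Y)"
  shows "D e1 = 0" and "E e1 = 0"
proof -
  have Dn: "D (axis k 1) $ I1 = 0" if "k \<noteq> I1" for k
    using der_n[OF D] that by (simp add: axis_nth_idx4)
  have En: "E (axis k 1) $ I1 = 0" if "k \<noteq> I1" for k
    using der_n[OF E] that by (simp add: axis_nth_idx4)
  have "D e1 $ k = 0" if "k \<noteq> I1" for k
  proof -
    have "D e1 $ k = std (D e1) (axis k 1)" by (simp add: std_axis)
    also have "\<dots> = cnj (std (axis k 1) (D e1))" by (rule std_cnj)
    also have "\<dots> = cnj (std (E (axis k 1)) e1)" by (simp add: adj)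
    also have "\<dots> = 0" using En[OF that] by (simp add: std_e1)
    finally show ?thesis .
  qed
  then show "D e1 = 0" using der_a0[OF D] by (simp add: vec_eq_idx4)
  have "E e1 $ k = 0" if "k \<noteq> I1" for k
  proof -
    have "E e1 $ k = std (E e1) (axis k 1)" by (simp add: std_axis)
    also have "\<dots> = std e1 (D (axis k 1))" by (simp add: adj)
    also have "\<dots> = cnj (std (D (axis k 1)) e1)" by (rule std_cnj)
    also have "\<dots> = 0" using Dn[OF that] by (simp add: std_e1)
    finally show ?thesis .
  qed
  then show "E e1 = 0" using der_a0[OF E] by (simp add: vec_eq_idx4)
qed

lemma Nm_herm: "Nm m j k = cnj (Nm m k j)"
  by (simp add: Nm_def algebra_simps)

lemma trace_identity:
  fixes n p :: "idx4 \<Rightarrow> idx4 \<Rightarrow> complex"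
  assumes p: "\<And>j k. p j k = (\<Sum>l\<in>{I2,I3,I4}. m j l * cnj (m k l)) - (\<Sum>l\<in>{I2,I3,I4}. cnj (m l j) * m l k)"
  shows "(\<Sum>k\<in>{I2,I3,I4}. \<Sum>j\<in>{I2,I3,I4}. n k j * p j k)
   = (\<Sum>k\<in>{I2,I3,I4}. \<Sum>l\<in>{I2,I3,I4}. cnj (m k l) *
      ((\<Sum>j\<in>{I2,I3,I4}. n k j * m j l) - (\<Sum>j\<in>{I2,I3,I4}. m k j * n j l)))"
  unfolding p by (simp add: algebra_simps)

lemma herm_sum:
  fixes p :: "idx4 \<Rightarrow> idx4 \<Rightarrow> complex"
  assumes p: "\<And>j k. p j k = cnj (p k j)"
  shows "(\<Sum>k\<in>A. \<Sum>j\<in>B. p k j * p j k) = (\<Sum>k\<in>A. \<Sum>j\<in>B. p k j * cnj (p k j))"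
proof (intro sum.cong refl)
  fix k j show "p k j * p j k = p k j * cnj (p k j)" by (metis p)
qed

lemma Nm_tr0: "Nm m k j = (\<Sum>l\<in>{I2,I3,I4}. m k l * cnj (m j l)) - (\<Sum>l\<in>{I2,I3,I4}. cnj (m l k) * m l j)"
  using tr0 by (simp add: Nm_def)

lemma Nm_entry:
  assumes "k \<noteq> I1"
  shows "Mv m (Mh m x) $ k - Mh m (Mv m x) $ k = Nm m k I2 * x$I2 + Nm m k I3 * x$I3 + Nm m k I4 * x$I4"
  using assms tr0 by (simp add: Mv_def Mh_def Nm_def algebra_simps)

lemma comm_entry:
  assumes "\<And>u. u$I1 = 0 \<Longrightarrow> Kop m (Mv m u) = Mv m (Kop m u)"
    and j: "j \<in> {I2,I3,I4}" and k: "k \<in> {I2,I3,I4}"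
  shows "(\<Sum>l\<in>{I2,I3,I4}. Nm m k l * m l j) - (\<Sum>l\<in>{I2,I3,I4}. m k l * Nm m l j) = 0"
proof -
  have "Kop m (Mv m (axis j 1)) $ k = Mv m (Kop m (axis j 1)) $ k"
    using assms(1)[of "axis j 1"] j by (auto simp: axis_nth_idx4)
  then show ?thesis using j k by (auto simp: Kop_def Mv_def axis_nth_idx4 add.assoc)
qed

lemma sum_sq_zero:
  fixes p :: "idx4 \<Rightarrow> idx4 \<Rightarrow> complex"
  assumes S: "(\<Sum>k\<in>A. \<Sum>j\<in>A. p k j * cnj (p k j)) = 0" and A: "finite A"
    and k: "k \<in> A" and j: "j \<in> A"
  shows "p k j = 0"
proof -
  have "Re (\<Sum>k\<in>A. \<Sum>j\<in>A. p k j * cnj (p k j)) = (\<Sum>k\<in>A. \<Sum>j\<in>A. (cmod (p k j))^2)"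
    by (simp add: Re_sum complex_mult_cnj cmod_def)
  then have Z: "(\<Sum>k\<in>A. \<Sum>j\<in>A. (cmod (p k j))^2) = 0" using S by simp
  have "(\<Sum>j\<in>A. (cmod (p k j))^2) = 0"
    using Z A k by (subst (asm) sum_nonneg_eq_0_iff) (auto intro: sum_nonneg)
  then have "(cmod (p k j))^2 = 0"
    using A j by (subst (asm) sum_nonneg_eq_0_iff) auto
  then show ?thesis by simp
qed

theorem sol_imp_normal:
  assumes sol: "expanding_alg_soliton (brM m) std"
  shows "Mv m (Mh m x) = Mh m (Mv m x)"
proof -
  obtain c D where c: "c < 0" and D: "derivation (brM m) D"
    and E: "derivation (brM m) (h_adjoint std D)"
    and K: "Kop m = (\<lambda>X. complex_of_real c *s X + (1/2 :: complex) *s (D X + h_adjoint std D X))"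
    using sol unfolding expanding_alg_soliton_def hcf_operator_brM by blast
  define E where "E = h_adjoint std D"
  have clD: "complex_linear D" using D unfolding derivation_def by blast
  have adj: "\<And>X Y. std (E X) Y = std X (D Y)" unfolding E_def by (rule h_adjoint_std[OF clD])
  have E': "derivation (brM m) E" using E by (simp add: E_def)
  have Kc: "Kop m (Mv m u) = Mv m (Kop m u)" if u: "u$I1 = 0" for u
  proof -
    have "Kop m (Mv m u) = complex_of_real c *s Mv m u + (1/2 :: complex) *s (D (Mv m u) + E (Mv m u))"
      by (simp add: K E_def)
    also have "\<dots> = complex_of_real c *s Mv m u + (1/2 :: complex) *s (Mv m (D u) + Mv m (E u))"
      using der_comm[OF D u] der_comm[OF E' u] by simp
    also have "\<dots> = Mv m (Kop m u)"
      by (simp add: K E_def Mv_add Mv_scale)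
    finally show ?thesis .
  qed
  have ce: "\<And>j k. j \<in> {I2,I3,I4} \<Longrightarrow> k \<in> {I2,I3,I4} \<Longrightarrow>
     (\<Sum>l\<in>{I2,I3,I4}. Nm m k l * m l j) - (\<Sum>l\<in>{I2,I3,I4}. m k l * Nm m l j) = 0"
    using comm_entry[OF Kc] by blast
  have "(\<Sum>k\<in>{I2,I3,I4}. \<Sum>j\<in>{I2,I3,I4}. Nm m k j * Nm m j k)
     = (\<Sum>k\<in>{I2,I3,I4}. \<Sum>l\<in>{I2,I3,I4}. cnj (m k l) *
      ((\<Sum>j\<in>{I2,I3,I4}. Nm m k j * m j l) - (\<Sum>j\<in>{I2,I3,I4}. m k j * Nm m j l)))"
    by (rule trace_identity) (rule Nm_tr0)
  also have "\<dots> = 0"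
    using ce by simp
  finally have S0: "(\<Sum>k\<in>{I2,I3,I4}. \<Sum>j\<in>{I2,I3,I4}. Nm m k j * Nm m j k) = 0" .
  have H: "(\<Sum>k\<in>{I2,I3,I4}. \<Sum>j\<in>{I2,I3,I4}. Nm m k j * Nm m j k) =
     (\<Sum>k\<in>{I2,I3,I4}. \<Sum>j\<in>{I2,I3,I4}. Nm m k j * cnj (Nm m k j))"
    by (rule herm_sum) (rule Nm_herm)
  have "(\<Sum>k\<in>{I2,I3,I4}. \<Sum>j\<in>{I2,I3,I4}. Nm m k j * cnj (Nm m k j)) = 0"
    using S0 H by metis
  then have N0: "Nm m k j = 0" if "k \<in> {I2,I3,I4}" "j \<in> {I2,I3,I4}" for k j
    using sum_sq_zero[of "Nm m" "{I2,I3,I4}" k j] that by simp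
  have "Mv m (Mh m x) $ k - Mh m (Mv m x) $ k = 0" if k: "k \<noteq> I1" for k
  proof -
    have k': "k \<in> {I2,I3,I4}" using k by (cases k) auto
    show ?thesis unfolding Nm_entry[OF k] using N0[OF k'] by simp
  qed
  then show ?thesis by (simp add: vec_eq_idx4)
qed

end




lemma Basis_cvec4: "(Basis :: idx4 cvec set) = {axis I1 1, axis I1 \<i>, axis I2 1, axis I2 \<i>, axis I3 1, axis I3 \<i>, axis I4 1, axis I4 \<i>}"
  by (auto simp: Basis_vec_def Basis_complex_def UNIV_idx4)

lemma real_trace_Basis: "real_trace f = (\<Sum>b\<in>Basis. f b \<bullet> b)" for f :: "idx4 cvec \<Rightarrow> idx4 cvec"
  unfolding real_trace_def Basis_cvec4 sum_idx4
  by (simp add: axis_eq_axis inner_axis inner_complex_def algebra_simps)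

lemma trace_comm:
  fixes f g :: "'a::euclidean_space \<Rightarrow> 'a"
  assumes f: "linear f" and g: "linear g"
  shows "(\<Sum>b\<in>Basis. f (g b) \<bullet> b) = (\<Sum>b\<in>Basis. g (f b) \<bullet> b)"
proof -
  have fg: "f (g b) \<bullet> b = (\<Sum>c\<in>Basis. (g b \<bullet> c) * (f c \<bullet> b))" for b
  proof -
    have "f (g b) = f (\<Sum>c\<in>Basis. (g b \<bullet> c) *\<^sub>R c)" by (simp add: euclidean_representation)
    also have "\<dots> = (\<Sum>c\<in>Basis. (g b \<bullet> c) *\<^sub>R f c)"
      by (simp add: real_vector.linear_sum[OF f] linear_cmul[OF f])
    finally show ?thesis by (simp add: inner_sum_left)
  qed
  have gf: "g (f c) \<bullet> c = (\<Sum>b\<in>Basis. (f c \<bullet> b) * (g b \<bullet> c))" for c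
  proof -
    have "g (f c) = g (\<Sum>b\<in>Basis. (f c \<bullet> b) *\<^sub>R b)" by (simp add: euclidean_representation)
    also have "\<dots> = (\<Sum>b\<in>Basis. (f c \<bullet> b) *\<^sub>R g b)"
      by (simp add: real_vector.linear_sum[OF g] linear_cmul[OF g])
    finally show ?thesis by (simp add: inner_sum_left)
  qed
  have "(\<Sum>b\<in>Basis. f (g b) \<bullet> b) = (\<Sum>b\<in>Basis. \<Sum>c\<in>Basis. (g b \<bullet> c) * (f c \<bullet> b))"
    by (simp add: fg)
  also have "\<dots> = (\<Sum>c\<in>Basis. \<Sum>b\<in>Basis. (f c \<bullet> b) * (g b \<bullet> c))"
    by (subst sum.swap) (simp add: mult.commute)
  also have "\<dots> = (\<Sum>c\<in>Basis. g (f c) \<bullet> c)" by (simp add: gf)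
  finally show ?thesis .
qed

lemma vec_scaleR_s: "(r::real) *\<^sub>R (x::idx4 cvec) = complex_of_real r *s x"
  by (simp add: vec_eq_idx4 vec_scaleR_nth del: vector_scaleR_component)

lemma cl_linear: "complex_linear T \<Longrightarrow> linear (T :: idx4 cvec \<Rightarrow> idx4 cvec)"
  by (rule linearI) (simp_all add: cl_add vec_scaleR_s cl_scale)

lemma trace_conj:
  fixes T Ti f :: "idx4 cvec \<Rightarrow> idx4 cvec"
  assumes T: "linear T" and Ti: "linear Ti" and inv: "\<And>x. Ti (T x) = x" and f: "linear f"
  shows "real_trace (\<lambda>x. T (f (Ti x))) = real_trace f"
proof -
  have l: "linear (\<lambda>x. f (Ti x))" using linear_compose[OF Ti f] by (simp add: o_def)
  show ?thesis unfolding real_trace_Basis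
    using trace_comm[OF T l] by (simp add: inv)
qed

lemma brM_scaleR1: "brM m (r *\<^sub>R x) y = r *\<^sub>R brM m x y"
  by (simp add: vsimps algebra_simps)

lemma curvM_lin1: "linear (\<lambda>x. curvM m x y z)"
  by (rule linearI) (simp_all add: curvM_def LCf_add1 LCf_add2 brM_add1 LCf_scale1 LCf_scale2 brM_scaleR1 algebra_simps)

lemma ricci_curvM: "ricci (brM m) std y z = real_trace (\<lambda>x. curvM m x y z)"
  by (simp add: ricci_def curv_brM)

lemma ct_real:
  fixes f :: "idx4 cvec \<Rightarrow> idx4 cvec"
  assumes "complex_linear f"
  shows "complex_trace f = (complex_of_real (real_trace f) - \<i> * complex_of_real (real_trace (\<lambda>x. \<i> *s f x))) / 2"
proof -
  have fi: "f (axis k \<i>) = \<i> *s f (axis k 1)" for k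
  proof -
    have "axis k \<i> = \<i> *s (axis k 1 :: idx4 cvec)" by (simp add: vec_eq_idx4 axis_nth_idx4)
    then show ?thesis using cl_scale[OF assms] by simp
  qed
  show ?thesis
    unfolding complex_trace_def real_trace_def sum_idx4 fi
    by (simp add: complex_eq_iff algebra_simps)
qed

lemma i_s_lin: "linear (\<lambda>x::idx4 cvec. \<i> *s x)"
  by (rule linearI) (simp_all add: vec_eq_idx4 vec_scaleR_nth algebra_simps)

locale frame =
  fixes h :: "idx4 cvec \<Rightarrow> idx4 cvec \<Rightarrow> complex" and br :: "idx4 cvec \<Rightarrow> idx4 cvec \<Rightarrow> idx4 cvec"
    and m :: "idx4 \<Rightarrow> idx4 \<Rightarrow> complex" and T Ti :: "idx4 cvec \<Rightarrow> idx4 cvec"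
  assumes herm: "hermitian_ip h" and Tcl: "complex_linear T"
    and inv1: "\<And>x. Ti (T x) = x" and inv2: "\<And>y. T (Ti y) = y"
    and hT: "\<And>x y. h (T x) (T y) = std x y"
    and brT: "\<And>x y. br (T x) (T y) = T (brM m x y)"
begin

lemma Ticl: "complex_linear Ti"
  unfolding complex_linear_def
proof (intro conjI allI)
  fix X Y show "Ti (X + Y) = Ti X + Ti Y"
    by (metis inv1 inv2 cl_add[OF Tcl])
next
  fix a X show "Ti (a *s X) = a *s Ti X"
    by (metis inv1 inv2 cl_scale[OF Tcl])
qed

lemma Tlin: "linear T" by (rule cl_linear[OF Tcl])
lemma Tilin: "linear Ti" by (rule cl_linear[OF Ticl])

lemma riem_T: "riem h (T x) (T y) = Re (std x y)" by (simp add: riem_def hT)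

lemma LC_T: "levi_civita br h X Y = T (LCf m (Ti X) (Ti Y))"
proof -
  have "levi_civita br h (T (Ti X)) (T (Ti Y)) = T (LCf m (Ti X) (Ti Y))"
  proof (rule levi_civita_eqI[OF herm], intro allI)
    fix Z
    obtain z where z: "Z = T z" using inv2 by metis
    show "2 * riem h (T (LCf m (Ti X) (Ti Y))) Z = riem h (br (T (Ti X)) (T (Ti Y))) Z
        - riem h (br (T (Ti Y)) Z) (T (Ti X)) + riem h (br Z (T (Ti X))) (T (Ti Y))"
      unfolding z brT riem_T by (rule koszul_LCf)
  qed
  then show ?thesis by (simp add: inv2)
qed

lemma curv_T: "curvature br h X Y Z = T (curvM m (Ti X) (Ti Y) (Ti Z))"
proof -
  have b: "br X Y = T (brM m (Ti X) (Ti Y))" using brT[of "Ti X" "Ti Y"] by (simp add: inv2)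
  show ?thesis
    unfolding curvature_def LC_T b inv1 curvM_def by (simp add: cl_diff[OF Tcl])
qed

lemma ricci_T: "ricci br h X Y = ricci (brM m) std (Ti X) (Ti Y)"
proof -
  have "ricci br h X Y = real_trace (\<lambda>W. T (curvM m (Ti W) (Ti X) (Ti Y)))"
    by (simp add: ricci_def curv_T)
  also have "\<dots> = real_trace (\<lambda>w. curvM m w (Ti X) (Ti Y))"
    by (rule trace_conj[OF Tlin Tilin inv1 curvM_lin1])
  also have "\<dots> = ricci (brM m) std (Ti X) (Ti Y)" by (simp add: ricci_curvM)
  finally show ?thesis .
qed

lemma Ti_i: "Ti (\<i> *s X) = \<i> *s Ti X" by (rule cl_scale[OF Ticl])

lemma ricci11_T: "ricci11 br h X Y = ricci11 (brM m) std (Ti X) (Ti Y)"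
  by (simp add: ricci11_def ricci_T Ti_i)

lemma ct_T: "complex_trace (br X) = complex_trace (brM m (Ti X))"
proof -
  have b: "br X = (\<lambda>Y. T (brM m (Ti X) (Ti Y)))"
  proof (rule ext)
    fix Y show "br X Y = T (brM m (Ti X) (Ti Y))" using brT[of "Ti X" "Ti Y"] by (simp add: inv2)
  qed
  have cl1: "complex_linear (br X)" unfolding b complex_linear_def
    by (simp add: cl_add[OF Ticl] cl_scale[OF Ticl] brM_add2 brM_scale2 cl_add[OF Tcl] cl_scale[OF Tcl])
  have cl2: "complex_linear (brM m (Ti X))" unfolding complex_linear_def
    by (simp add: brM_add2 brM_scale2)
  have l2: "linear (brM m (Ti X))" by (rule cl_linear[OF cl2])
  have l3: "linear (\<lambda>x. \<i> *s brM m (Ti X) x)"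
    using linear_compose[OF l2 i_s_lin] by (simp add: o_def)
  have r1: "real_trace (br X) = real_trace (brM m (Ti X))"
    unfolding b by (rule trace_conj[OF Tlin Tilin inv1 l2])
  have r2: "real_trace (\<lambda>x. \<i> *s br X x) = real_trace (\<lambda>x. \<i> *s brM m (Ti X) x)"
    unfolding b cl_scale[OF Tcl, symmetric] by (rule trace_conj[OF Tlin Tilin inv1 l3])
  show ?thesis by (simp add: ct_real[OF cl1] ct_real[OF cl2] r1 r2)
qed

lemma hcf_T: "hcf_tensor br h X Y = hcf_tensor (brM m) std (Ti X) (Ti Y)"
  by (simp add: hcf_tensor_def ricci11_T ct_T Ti_i)

lemma h_eqI: "(\<And>Y. h a Y = h b Y) \<Longrightarrow> a = b"
proof -
  assume H: "\<And>Y. h a Y = h b Y"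
  have "Re (h (a - b) (a - b)) = 0" using H[of "a - b"] by (simp add: herm_diff_left[OF herm])
  then have "a - b = 0" by (rule herm_zero_iff[OF herm])
  then show ?thesis by simp
qed

lemma hcfop_T: "hcf_operator br h = (\<lambda>X. T (Kop m (Ti X)))"
  unfolding hcf_operator_def
proof (rule the_equality)
  show "\<forall>X Y. h (T (Kop m (Ti X))) Y = hcf_tensor br h X Y"
  proof (intro allI)
    fix X Y
    have "h (T (Kop m (Ti X))) Y = h (T (Kop m (Ti X))) (T (Ti Y))" by (simp add: inv2)
    also have "\<dots> = hcf_tensor br h X Y" by (simp add: hT HH_std hcf_T)
    finally show "h (T (Kop m (Ti X))) Y = hcf_tensor br h X Y" .
  qed
next
  fix T' assume A: "\<forall>X Y. h (T' X) Y = hcf_tensor br h X Y"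
  show "T' = (\<lambda>X. T (Kop m (Ti X)))"
  proof
    fix X
    show "T' X = T (Kop m (Ti X))"
    proof (rule h_eqI)
      fix Y
      have "h (T (Kop m (Ti X))) Y = h (T (Kop m (Ti X))) (T (Ti Y))" by (simp add: inv2)
      also have "\<dots> = hcf_tensor br h X Y" by (simp add: hT HH_std hcf_T)
      finally show "h (T' X) Y = h (T (Kop m (Ti X))) Y" using A by simp
    qed
  qed
qed

lemma adj_T:
  assumes D: "complex_linear D"
  shows "h_adjoint h D = (\<lambda>X. T (h_adjoint std (\<lambda>x. Ti (D (T x))) (Ti X)))"
proof -
  define D' where "D' = (\<lambda>x. Ti (D (T x)))"
  have D'cl: "complex_linear D'" unfolding D'_def complex_linear_def
    by (simp add: cl_add[OF Tcl] cl_scale[OF Tcl] cl_add[OF D] cl_scale[OF D] cl_add[OF Ticl] cl_scale[OF Ticl])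
  have key: "h (T (h_adjoint std D' (Ti X))) Y = h X (D Y)" for X Y
  proof -
    have "h (T (h_adjoint std D' (Ti X))) Y = h (T (h_adjoint std D' (Ti X))) (T (Ti Y))" by (simp add: inv2)
    also have "\<dots> = std (Ti X) (D' (Ti Y))" by (simp add: hT h_adjoint_std[OF D'cl])
    also have "\<dots> = h (T (Ti X)) (T (D' (Ti Y)))" by (simp add: hT)
    also have "\<dots> = h X (D Y)" by (simp add: D'_def inv2)
    finally show ?thesis .
  qed
  have "h_adjoint h D = (\<lambda>X. T (h_adjoint std D' (Ti X)))"
    unfolding h_adjoint_def[of h D]
  proof (rule the_equality)
    show "\<forall>X Y. h (T (h_adjoint std D' (Ti X))) Y = h X (D Y)" using key by simp
  next
    fix E assume "\<forall>X Y. h (E X) Y = h X (D Y)"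
    then show "E = (\<lambda>X. T (h_adjoint std D' (Ti X)))"
      using key by (intro ext h_eqI) simp
  qed
  then show ?thesis by (simp add: D'_def)
qed

lemma der_T1:
  assumes "derivation br D"
  shows "derivation (brM m) (\<lambda>x. Ti (D (T x)))"
proof -
  have D: "complex_linear D" using assms unfolding derivation_def by blast
  have Dd: "\<And>X Y. D (br X Y) = br (D X) Y + br X (D Y)" using assms unfolding derivation_def by blast
  show ?thesis unfolding derivation_def
  proof (intro conjI allI)
    show "complex_linear (\<lambda>x. Ti (D (T x)))" unfolding complex_linear_def
      by (simp add: cl_add[OF Tcl] cl_scale[OF Tcl] cl_add[OF D] cl_scale[OF D] cl_add[OF Ticl] cl_scale[OF Ticl])
  next
    fix x y
    have "Ti (D (T (brM m x y))) = Ti (D (br (T x) (T y)))" by (simp add: brT)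
    also have "\<dots> = Ti (br (D (T x)) (T y) + br (T x) (D (T y)))" by (simp add: Dd)
    also have "\<dots> = Ti (br (T (Ti (D (T x)))) (T y)) + Ti (br (T x) (T (Ti (D (T y)))))"
      by (simp add: inv2 cl_add[OF Ticl])
    also have "\<dots> = brM m (Ti (D (T x))) y + brM m x (Ti (D (T y)))" by (simp add: brT inv1)
    finally show "Ti (D (T (brM m x y))) = brM m (Ti (D (T x))) y + brM m x (Ti (D (T y)))" .
  qed
qed

lemma der_T2:
  assumes "derivation (brM m) D'"
  shows "derivation br (\<lambda>X. T (D' (Ti X)))"
proof -
  have D: "complex_linear D'" using assms unfolding derivation_def by blast
  have Dd: "\<And>X Y. D' (brM m X Y) = brM m (D' X) Y + brM m X (D' Y)" using assms unfolding derivation_def by blast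
  have b: "br X Y = T (brM m (Ti X) (Ti Y))" for X Y using brT[of "Ti X" "Ti Y"] by (simp add: inv2)
  show ?thesis unfolding derivation_def
  proof (intro conjI allI)
    show "complex_linear (\<lambda>X. T (D' (Ti X)))" unfolding complex_linear_def
      by (simp add: cl_add[OF Tcl] cl_scale[OF Tcl] cl_add[OF D] cl_scale[OF D] cl_add[OF Ticl] cl_scale[OF Ticl])
  next
    fix X Y
    show "T (D' (Ti (br X Y))) = br (T (D' (Ti X))) Y + br X (T (D' (Ti Y)))"
      by (simp add: b inv1 Dd cl_add[OF Tcl])
  qed
qed

theorem sol_T: "expanding_alg_soliton br h \<longleftrightarrow> expanding_alg_soliton (brM m) std"
proof
  assume "expanding_alg_soliton br h"
  then obtain c D where c: "c < 0" and D: "derivation br D" and E: "derivation br (h_adjoint h D)"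
    and K: "hcf_operator br h = (\<lambda>X. complex_of_real c *s X + (1/2 :: complex) *s (D X + h_adjoint h D X))"
    unfolding expanding_alg_soliton_def by blast
  have Dcl: "complex_linear D" using D unfolding derivation_def by blast
  define D' where "D' = (\<lambda>x. Ti (D (T x)))"
  define E' where "E' = h_adjoint std D'"
  have adj: "h_adjoint h D = (\<lambda>X. T (E' (Ti X)))" unfolding E'_def D'_def by (rule adj_T[OF Dcl])
  have D': "derivation (brM m) D'" unfolding D'_def by (rule der_T1[OF D])
  have E': "derivation (brM m) E'"
    using der_T1[OF E] unfolding adj by (simp add: inv1)
  have "Kop m = (\<lambda>x. complex_of_real c *s x + (1/2 :: complex) *s (D' x + E' x))"
  proof
    fix x
    have "Kop m x = Ti (hcf_operator br h (T x))" by (simp add: hcfop_T inv1)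
    also have "\<dots> = complex_of_real c *s x + (1/2 :: complex) *s (D' x + E' x)"
      unfolding K adj by (simp add: D'_def cl_add[OF Ticl] cl_scale[OF Ticl] inv1)
    finally show "Kop m x = complex_of_real c *s x + (1/2 :: complex) *s (D' x + E' x)" .
  qed
  then show "expanding_alg_soliton (brM m) std"
    unfolding expanding_alg_soliton_def hcf_operator_brM using c D' E' by (auto simp: E'_def)
next
  assume "expanding_alg_soliton (brM m) std"
  then obtain c D' where c: "c < 0" and D': "derivation (brM m) D'" and E': "derivation (brM m) (h_adjoint std D')"
    and K: "Kop m = (\<lambda>X. complex_of_real c *s X + (1/2 :: complex) *s (D' X + h_adjoint std D' X))"
    unfolding expanding_alg_soliton_def hcf_operator_brM by blast
  define D where "D = (\<lambda>X. T (D' (Ti X)))"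
  have D: "derivation br D" unfolding D_def by (rule der_T2[OF D'])
  have Dcl: "complex_linear D" using D unfolding derivation_def by blast
  have DD: "(\<lambda>x. Ti (D (T x))) = D'" by (simp add: D_def inv1)
  have adj: "h_adjoint h D = (\<lambda>X. T (h_adjoint std D' (Ti X)))"
    using adj_T[OF Dcl] by (simp add: DD)
  have E: "derivation br (h_adjoint h D)" unfolding adj by (rule der_T2[OF E'])
  have "hcf_operator br h = (\<lambda>X. complex_of_real c *s X + (1/2 :: complex) *s (D X + h_adjoint h D X))"
  proof
    fix X
    show "hcf_operator br h X = complex_of_real c *s X + (1/2 :: complex) *s (D X + h_adjoint h D X)"
      unfolding hcfop_T K adj unfolding D_def by (simp add: cl_add[OF Tcl] cl_scale[OF Tcl] inv2)
  qed
  then show "expanding_alg_soliton br h"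
    unfolding expanding_alg_soliton_def using c D E by blast
qed

end




context cubeM
begin

theorem unitary_imp_sol:
  assumes r: "r > 0" and U: "\<And>x. Mh m (Mv m x) = complex_of_real r *s np x"
  shows "expanding_alg_soliton (brM m) std"
proof -
  have MM: "Mv m (Mh m x) = complex_of_real r *s np x" for x
  proof -
    have "np x = inverse lam *s Mv m (Mv m (Mv m x))" using cube[of x] lam0 by simp
    then have "Mh m x = Mh m (inverse lam *s Mv m (Mv m (Mv m x)))" by (metis Mh_np)
    also have "\<dots> = inverse lam *s (complex_of_real r *s Mv m (Mv m x))"
      by (simp add: Mh_scale U)
    finally have "Mv m (Mh m x) = (inverse lam * complex_of_real r) *s Mv m (Mv m (Mv m x))"
      by (simp add: Mv_scale)
    then show ?thesis using cube[of x] lam0 by simp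
  qed
  have N0: "Nm m k j = 0" if k: "k \<in> {I2,I3,I4}" and j: "j \<in> {I2,I3,I4}" for k j
  proof -
    have k1: "k \<noteq> I1" using k by auto
    have "Mv m (Mh m (axis j 1)) $ k - Mh m (Mv m (axis j 1)) $ k = 0" by (simp add: MM U)
    then show ?thesis using j unfolding Nm_entry[OF k1] by (auto simp: axis_nth_idx4)
  qed
  have kap: "kap m = - 3 * complex_of_real r"
    unfolding kap_alt tr0 by (simp add: U np_def axis_nth_idx4)
  define c where "c = - 3 * r"
  define D where "D x = complex_of_real (3 * r) *s np x" for x
  have clD: "complex_linear D" unfolding complex_linear_def D_def
    by (simp add: vs algebra_simps)
  have derD: "derivation (brM m) D" unfolding derivation_def
    using clD by (simp add: D_def vs algebra_simps)
  have adjD: "h_adjoint std D = D"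
    by (rule h_adjoint_eqI) (simp add: D_def std_def np_def algebra_simps)
  have K: "Kop m = (\<lambda>X. complex_of_real c *s X + (1/2 :: complex) *s (D X + h_adjoint std D X))"
  proof
    fix X
    show "Kop m X = complex_of_real c *s X + (1/2 :: complex) *s (D X + h_adjoint std D X)"
      unfolding adjD using N0 by (simp add: Kop_def kap c_def D_def vs algebra_simps)
  qed
  show ?thesis unfolding expanding_alg_soliton_def hcf_operator_brM
  proof (intro exI conjI)
    show "c < 0" using r by (simp add: c_def)
    show "derivation (brM m) D" by (rule derD)
    show "derivation (brM m) (h_adjoint std D)" by (simp add: adjD derD)
    show "Kop m = (\<lambda>X. complex_of_real c *s X + (1/2 :: complex) *s (D X + h_adjoint std D X))" by (rule K)
  qed
qed

end

lemma normal_eig_orth: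
  assumes N: "\<And>x. Mv m (Mh m x) = Mh m (Mv m x)"
    and v: "Mv m v = a *s v" and w: "Mv m w = b *s w" and ne: "a \<noteq> b"
  shows "std v w = 0"
proof -
  have Mh_eig: "Mh m u = cnj c *s u" if u: "Mv m u = c *s u" for u c
  proof -
    have s1: "std (Mh m u) (Mh m u) = c * std (Mh m u) u"
    proof -
      have "std (Mh m u) (Mh m u) = std (Mv m (Mh m u)) u" by (simp add: std_Mv)
      also have "\<dots> = std (Mh m (c *s u)) u" by (simp add: N u)
      finally show ?thesis by (simp add: Mh_scale std_scale_left)
    qed
    have s2: "std u (Mh m u) = c * std u u" by (simp add: std_Mv[symmetric] u std_scale_left)
    have s3: "std (Mh m u) u = cnj c * cnj (std u u)"
      using s2 std_cnj[of "Mh m u" u] by simp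
    have "std (Mh m u - cnj c *s u) (Mh m u - cnj c *s u) = 0"
      by (simp add: std_diff_left std_diff_right std_scale_left std_scale_right s1 s2 s3 algebra_simps)
    then have "Re (std (Mh m u - cnj c *s u) (Mh m u - cnj c *s u)) = 0" by simp
    then have "Mh m u - cnj c *s u = 0" by (rule herm_zero_iff[OF hermitian_std])
    then show ?thesis by simp
  qed
  have "a * std v w = std (Mv m v) w" by (simp add: v std_scale_left)
  also have "\<dots> = std v (Mh m w)" by (rule std_Mv)
  also have "\<dots> = b * std v w" by (simp add: Mh_eig[OF w] std_scale_right)
  finally have "(a - b) * std v w = 0" by (simp add: algebra_simps)
  then show ?thesis using ne by simp
qed




lemma nz_by_comp: "x $ k \<noteq> 0 \<Longrightarrow> x \<noteq> 0" by auto

context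
  fixes h :: "idx4 cvec \<Rightarrow> idx4 cvec \<Rightarrow> complex"
  assumes herm: "hermitian_ip h"
begin

lemma h_add_l: "h (a + b) c = h a c + h b c" using herm unfolding hermitian_ip_def by blast
lemma h_scale_l: "h (s *s a) c = s * h a c" using herm unfolding hermitian_ip_def by blast
lemma h_cnj: "h b a = cnj (h a b)" using herm unfolding hermitian_ip_def by blast
lemma h_pos: "a \<noteq> 0 \<Longrightarrow> Re (h a a) > 0" using herm unfolding hermitian_ip_def by blast
lemma h_add_r: "h c (a + b) = h c a + h c b"
  by (metis h_cnj h_add_l complex_cnj_add)
lemma h_scale_r: "h a (s *s c) = cnj s * h a c"
  by (metis h_cnj h_scale_l complex_cnj_mult complex_cnj_cnj)
lemma h_diff_l: "h (a - b) c = h a c - h b c" by (rule herm_diff_left[OF herm])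
lemma h_diff_r: "h c (a - b) = h c a - h c b"
  by (metis h_cnj h_diff_l complex_cnj_diff)
lemma h_zero_l: "h 0 c = 0" using h_scale_l[of 0 c c] by simp
lemma h_zero_r: "h c 0 = 0" using h_scale_r[of c 0 c] by simp
lemma h_real: "h a a = complex_of_real (Re (h a a))"
proof -
  have "Im (h a a) = 0" using h_cnj[of a a] by (metis cnj.sel(2) complex.expand equal_neg_zero cnj.sel(1))
  then show ?thesis by (simp add: complex_eq_iff)
qed

lemmas h_simps = h_add_l h_scale_l h_add_r h_scale_r h_diff_l h_diff_r h_zero_l h_zero_r

definition nrm :: "idx4 cvec \<Rightarrow> idx4 cvec" where
  "nrm w = complex_of_real (1 / sqrt (Re (h w w))) *s w"

lemma nrm_unit: assumes "w \<noteq> 0" shows "h (nrm w) (nrm w) = 1"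
proof -
  define r where "r = sqrt (Re (h w w))"
  have p: "Re (h w w) > 0" using h_pos[OF assms] .
  then have r0: "r > 0" by (simp add: r_def)
  have hw: "h w w = complex_of_real (r * r)" using p by (subst h_real) (simp add: r_def)
  have "h (nrm w) (nrm w) = complex_of_real (1 / r) * complex_of_real (1 / r) * h w w"
    by (simp add: nrm_def h_scale_l h_scale_r r_def)
  also have "\<dots> = complex_of_real ((1 / r) * (1 / r) * (r * r))" by (simp add: hw)
  also have "\<dots> = 1" using r0 by simp
  finally show ?thesis .
qed

lemma nrm_l: "h (nrm w) x = complex_of_real (1 / sqrt (Re (h w w))) * h w x"
  by (simp add: nrm_def h_scale_l)
lemma nrm_nth: "nrm w $ k = complex_of_real (1 / sqrt (Re (h w w))) * w $ k"
  by (simp add: nrm_def)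
lemma nrm_nz: "w \<noteq> 0 \<Longrightarrow> w $ k \<noteq> 0 \<Longrightarrow> nrm w $ k \<noteq> 0"
  using h_pos[of w] by (simp add: nrm_nth)

lemma frame_exists:
  "\<exists>E :: idx4 \<Rightarrow> idx4 cvec. (\<forall>i j. h (E i) (E j) = (if i = j then 1 else 0))
      \<and> (\<forall>k. k \<noteq> I1 \<longrightarrow> E k $ I1 = 0) \<and> E I1 $ I1 \<noteq> 0"
proof -
  define Z :: "idx4 \<Rightarrow> idx4 cvec" where "Z k = axis k 1" for k
  define w2 where "w2 = Z I2"
  define e2 where "e2 = nrm w2"
  define w3 where "w3 = Z I3 - h (Z I3) e2 *s e2"
  define e3 where "e3 = nrm w3"
  define w4 where "w4 = Z I4 - h (Z I4) e2 *s e2 - h (Z I4) e3 *s e3"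
  define e4 where "e4 = nrm w4"
  define w1 where "w1 = Z I1 - h (Z I1) e2 *s e2 - h (Z I1) e3 *s e3 - h (Z I1) e4 *s e4"
  define e1 where "e1 = nrm w1"
  have w2c: "w2 $ I1 = 0" "w2 $ I3 = 0" "w2 $ I4 = 0" "w2 $ I2 = 1" by (simp_all add: w2_def Z_def axis_nth_idx4)
  have w2nz: "w2 \<noteq> 0" by (rule nz_by_comp[of _ I2]) (simp add: w2c)
  have e2c: "e2 $ I1 = 0" "e2 $ I3 = 0" "e2 $ I4 = 0" by (simp_all add: e2_def nrm_nth w2c)
  have w3c: "w3 $ I1 = 0" "w3 $ I4 = 0" "w3 $ I3 = 1" by (simp_all add: w3_def Z_def axis_nth_idx4 e2c)
  have w3nz: "w3 \<noteq> 0" by (rule nz_by_comp[of _ I3]) (simp add: w3c)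
  have e3c: "e3 $ I1 = 0" "e3 $ I4 = 0" by (simp_all add: e3_def nrm_nth w3c)
  have w4c: "w4 $ I1 = 0" "w4 $ I4 = 1" by (simp_all add: w4_def Z_def axis_nth_idx4 e2c e3c)
  have w4nz: "w4 \<noteq> 0" by (rule nz_by_comp[of _ I4]) (simp add: w4c)
  have e4c: "e4 $ I1 = 0" by (simp add: e4_def nrm_nth w4c)
  have w1c: "w1 $ I1 = 1" by (simp add: w1_def Z_def axis_nth_idx4 e2c e3c e4c)
  have w1nz: "w1 \<noteq> 0" by (rule nz_by_comp[of _ I1]) (simp add: w1c)
  have e1c: "e1 $ I1 \<noteq> 0" unfolding e1_def using nrm_nz[OF w1nz] w1c by simp
  have n22: "h e2 e2 = 1" unfolding e2_def by (rule nrm_unit[OF w2nz])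
  have n33: "h e3 e3 = 1" unfolding e3_def by (rule nrm_unit[OF w3nz])
  have n44: "h e4 e4 = 1" unfolding e4_def by (rule nrm_unit[OF w4nz])
  have n11: "h e1 e1 = 1" unfolding e1_def by (rule nrm_unit[OF w1nz])
  have o32: "h e3 e2 = 0" unfolding e3_def nrm_l by (simp add: w3_def h_simps n22)
  have o23: "h e2 e3 = 0" using o32 h_cnj[of e2 e3] by simp
  have o42: "h e4 e2 = 0" unfolding e4_def nrm_l by (simp add: w4_def h_simps n22 o32)
  have o43: "h e4 e3 = 0" unfolding e4_def nrm_l by (simp add: w4_def h_simps n33 o23)
  have o24: "h e2 e4 = 0" using o42 h_cnj[of e2 e4] by simp
  have o34: "h e3 e4 = 0" using o43 h_cnj[of e3 e4] by simp
  have o12: "h e1 e2 = 0" unfolding e1_def nrm_l by (simp add: w1_def h_simps n22 o32 o42)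
  have o13: "h e1 e3 = 0" unfolding e1_def nrm_l by (simp add: w1_def h_simps n33 o23 o43)
  have o14: "h e1 e4 = 0" unfolding e1_def nrm_l by (simp add: w1_def h_simps n44 o24 o34)
  have o21: "h e2 e1 = 0" using o12 h_cnj[of e2 e1] by simp
  have o31: "h e3 e1 = 0" using o13 h_cnj[of e3 e1] by simp
  have o41: "h e4 e1 = 0" using o14 h_cnj[of e4 e1] by simp
  define E where "E k = (case k of I1 \<Rightarrow> e1 | I2 \<Rightarrow> e2 | I3 \<Rightarrow> e3 | I4 \<Rightarrow> e4)" for k
  have "\<forall>i j. h (E i) (E j) = (if i = j then 1 else 0)"
  proof (intro allI)
    fix i j show "h (E i) (E j) = (if i = j then 1 else 0)"
      by (cases i; cases j) (simp_all add: E_def n11 n22 n33 n44 o12 o13 o14 o21 o23 o24 o31 o32 o34 o41 o42 o43)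
  qed
  moreover have "\<forall>k. k \<noteq> I1 \<longrightarrow> E k $ I1 = 0"
  proof (intro allI impI)
    fix k :: idx4 assume "k \<noteq> I1" then show "E k $ I1 = 0" by (cases k) (simp_all add: E_def e2c e3c e4c)
  qed
  moreover have "E I1 $ I1 \<noteq> 0" by (simp add: E_def e1c)
  ultimately show ?thesis by blast
qed

end

definition Pm :: "idx4 cvec \<Rightarrow> idx4 cvec" where
  "Pm Y = (\<chi> k. case k of I1 \<Rightarrow> 0 | I2 \<Rightarrow> Y$I4 | I3 \<Rightarrow> Y$I2 | I4 \<Rightarrow> Y$I3)"

lemma Pm_nth [simp]: "Pm Y $ I1 = 0" "Pm Y $ I2 = Y$I4" "Pm Y $ I3 = Y$I2" "Pm Y $ I4 = Y$I3"
  by (simp_all add: Pm_def)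
lemma br_Pm: "br_g4 X Y = X$I1 *s Pm Y - Y$I1 *s Pm X"
  by (simp add: br_g4_def vec_eq_idx4 algebra_simps)
lemma Pm_add: "Pm (x + y) = Pm x + Pm y" by (simp add: vec_eq_idx4)
lemma Pm_scale: "Pm (c *s x) = c *s Pm x" by (simp add: vec_eq_idx4)
lemma Pm_diff: "Pm (x - y) = Pm x - Pm y" by (simp add: vec_eq_idx4)
lemma Pm3: "Pm (Pm (Pm Y)) = np Y" by (simp add: vec_eq_idx4 np_def)
lemma Pm_np: "Pm (np Y) = Pm Y" by (simp add: vec_eq_idx4 np_def)
lemma ct_g4: "complex_trace (br_g4 X) = 0"
  by (simp add: complex_trace_def sum_idx4 br_g4_def axis_nth_idx4)

definition TT :: "(idx4 \<Rightarrow> idx4 cvec) \<Rightarrow> idx4 cvec \<Rightarrow> idx4 cvec" where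
  "TT E x = x$I1 *s E I1 + x$I2 *s E I2 + x$I3 *s E I3 + x$I4 *s E I4"
definition TiT :: "(idx4 cvec \<Rightarrow> idx4 cvec \<Rightarrow> complex) \<Rightarrow> (idx4 \<Rightarrow> idx4 cvec) \<Rightarrow> idx4 cvec \<Rightarrow> idx4 cvec" where
  "TiT h E y = (\<chi> k. h y (E k))"
definition mm :: "(idx4 cvec \<Rightarrow> idx4 cvec \<Rightarrow> complex) \<Rightarrow> (idx4 \<Rightarrow> idx4 cvec) \<Rightarrow> idx4 \<Rightarrow> idx4 \<Rightarrow> complex" where
  "mm h E k j = E I1 $ I1 * h (Pm (E j)) (E k)"

locale hframe =
  fixes h :: "idx4 cvec \<Rightarrow> idx4 cvec \<Rightarrow> complex" and E :: "idx4 \<Rightarrow> idx4 cvec"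
  assumes herm: "hermitian_ip h"
    and orth: "\<And>i j. h (E i) (E j) = (if i = j then 1 else 0)"
    and Ec: "\<And>k. k \<noteq> I1 \<Longrightarrow> E k $ I1 = 0"
    and E1: "E I1 $ I1 \<noteq> 0"
begin

abbreviation "a1 \<equiv> E I1 $ I1"
abbreviation "T \<equiv> TT E"
abbreviation "Ti \<equiv> TiT h E"
abbreviation "m \<equiv> mm h E"

lemmas hs = h_simps[OF herm]

lemma TT_cl: "complex_linear T"
  unfolding complex_linear_def TT_def by (simp add: algebra_simps vector_add_divide_simps(1))

lemma hT: "h (T x) (T y) = std x y"
  unfolding TT_def by (simp add: hs orth std_def)

lemma inv1: "Ti (T x) = x"
  unfolding TiT_def TT_def by (simp add: vec_eq_idx4 hs orth)

lemma TT_inj: "inj T" by (metis inv1 injI)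

lemma TT_surj: "surj T"
  by (rule linear_injective_imp_surjective[OF cl_linear[OF TT_cl] TT_inj]) auto

lemma inv2: "T (Ti y) = y"
proof -
  obtain x where "y = T x" using TT_surj by blast
  then show ?thesis by (simp add: inv1)
qed

lemma TT_I1: "T x $ I1 = x$I1 * a1"
  by (simp add: TT_def Ec)

lemma n_perp: assumes "w$I1 = 0" shows "h w (E I1) = 0"
proof -
  have "w $ I1 = T (Ti w) $ I1" by (simp add: inv2)
  also have "\<dots> = h w (E I1) * a1" by (simp add: TT_I1 TiT_def)
  finally show ?thesis using assms E1 by simp
qed

lemma Ti_inj: "Ti u = Ti v \<Longrightarrow> u = v" by (metis inv2)

lemma TT_e1: "T (axis I1 1) = E I1" by (simp add: TT_def axis_nth_idx4)

lemma brT: "br_g4 (T x) (T y) = T (brM m x y)"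
proof -
  have "Ti (br_g4 (T x) (T y)) = brM m x y"
  proof -
    have c1: "h (br_g4 (T x) (T y)) (E I1) = 0" by (rule n_perp) (simp add: br_g4_def)
    show ?thesis
      unfolding vec_eq_idx4 using c1
      by (simp add: TiT_def br_Pm TT_I1 hs brM_def mm_def TT_def Pm_add Pm_scale Ec algebra_simps)
  qed
  then show ?thesis by (metis inv2)
qed

lemma TMv: "T (Mv m x) = a1 *s Pm (T (np x))"
proof -
  have "T (Mv m x) = T (brM m (axis I1 1) (np x))" by (simp add: brM_e1)
  also have "\<dots> = br_g4 (E I1) (T (np x))" by (simp add: brT[symmetric] TT_e1)
  also have "\<dots> = a1 *s Pm (T (np x))" by (simp add: br_Pm TT_I1 np_def)
  finally show ?thesis .
qed

lemma np_T_np: "np (T (np x)) = T (np x)" by (rule np_id) (simp add: TT_I1 np_def)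

lemma cube_m: "Mv m (Mv m (Mv m x)) = a1^3 *s np x"
proof -
  have "T (Mv m (Mv m (Mv m x))) = a1 *s Pm (a1 *s Pm (a1 *s Pm (T (np x))))"
    by (simp add: TMv)
  also have "\<dots> = a1^3 *s T (np x)"
    by (simp add: Pm_scale Pm3 np_T_np power3_eq_cube)
  also have "\<dots> = T (a1^3 *s np x)" by (simp add: cl_scale[OF TT_cl])
  finally show ?thesis using TT_inj by (simp add: inj_eq)
qed

lemma frame_inst: "frame h br_g4 m T Ti"
  by unfold_locales (simp_all add: herm TT_cl inv1 inv2 hT brT)

lemma trM0: "trM m = 0"
proof -
  have "complex_trace (br_g4 (T (axis I1 1))) = complex_trace (brM m (Ti (T (axis I1 1))))"
    by (rule frame.ct_T[OF frame_inst])
  then show ?thesis by (simp add: ct_g4 inv1 ct_brM axis_nth_idx4)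
qed

lemma cube_inst: "cubeM m (a1^3)"
  by unfold_locales (simp_all add: trM0 E1 cube_m)

lemma sol_iff: "expanding_alg_soliton br_g4 h \<longleftrightarrow> expanding_alg_soliton (brM m) std"
  by (rule frame.sol_T[OF frame_inst])

end

section \<open>Cube roots of unity and eigenvectors of ad Z1\<close>

definition om :: complex where "om = Complex (-1/2) (sqrt 3 / 2)"

lemma om_cnj: "om * cnj om = 1"
proof -
  have "sqrt 3 * sqrt 3 = (3::real)" by simp
  then show ?thesis by (simp add: om_def complex_eq_iff algebra_simps)
qed
lemma cnj_om_om: "cnj om * om = 1" using om_cnj by (simp add: mult.commute)
lemma om_sq: "om * om = cnj om"
proof -
  have "sqrt 3 * sqrt 3 = (3::real)" by simp
  then show ?thesis by (simp add: om_def complex_eq_iff algebra_simps)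
qed
lemma cnj_om_sq: "cnj om * cnj om = om"
  using om_sq by (metis complex_cnj_cnj complex_cnj_mult)
lemma om_sum: "1 + om + cnj om = 0"
  by (simp add: om_def complex_eq_iff)
lemma om_ne1: "om \<noteq> 1" by (simp add: om_def complex_eq_iff)
lemma cnj_om_ne1: "cnj om \<noteq> 1" by (simp add: om_def complex_eq_iff)
lemma om_ne_cnj: "om \<noteq> cnj om" by (simp add: om_def complex_eq_iff)

definition fv :: "complex \<Rightarrow> idx4 cvec" where
  "fv \<mu> = (\<chi> k. case k of I1 \<Rightarrow> 0 | I2 \<Rightarrow> 1 | I3 \<Rightarrow> cnj \<mu> | I4 \<Rightarrow> \<mu>)"

lemma fv_nth [simp]: "fv \<mu> $ I1 = 0" "fv \<mu> $ I2 = 1" "fv \<mu> $ I3 = cnj \<mu>" "fv \<mu> $ I4 = \<mu>"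
  by (simp_all add: fv_def)

definition roots :: "complex set" where "roots = {1, om, cnj om}"

lemma root_props: "\<mu> \<in> roots \<Longrightarrow> \<mu> * cnj \<mu> = 1 \<and> \<mu> * \<mu> = cnj \<mu>"
  unfolding roots_def using om_cnj om_sq cnj_om_om cnj_om_sq by auto

lemma Pm_fv: "\<mu> \<in> roots \<Longrightarrow> Pm (fv \<mu>) = \<mu> *s fv \<mu>"
  using root_props[of \<mu>] by (simp add: vec_eq_idx4)

definition Fh :: "(idx4 cvec \<Rightarrow> idx4 cvec \<Rightarrow> complex) \<Rightarrow> bool" where
  "Fh h \<longleftrightarrow> h (fv 1) (fv om) = 0 \<and> h (fv 1) (fv (cnj om)) = 0 \<and> h (fv om) (fv (cnj om)) = 0"

definition cf :: "complex \<Rightarrow> idx4 cvec \<Rightarrow> complex" where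
  "cf \<mu> w = (w$I2 + \<mu> * w$I3 + cnj \<mu> * w$I4) / 3"

lemma expand_n:
  assumes "w$I1 = 0"
  shows "w = cf 1 w *s fv 1 + cf om w *s fv om + cf (cnj om) w *s fv (cnj om)"
proof -
  have c: "cnj om = - 1 - om" by (simp add: om_def complex_eq_iff)
  have s: "om * om = - 1 - om" using om_sq c by simp
  have s': "om * (om * z) = (- 1 - om) * z" for z using s by (simp add: mult.assoc[symmetric])
  show ?thesis using assms
    by (simp add: vec_eq_idx4 cf_def c s s' field_simps)
qed

lemma Pm_expand:
  assumes "w$I1 = 0"
  shows "Pm w = (cf 1 w) *s fv 1 + (cf om w * om) *s fv om + (cf (cnj om) w * cnj om) *s fv (cnj om)"
proof -
  have "Pm w = Pm (cf 1 w *s fv 1 + cf om w *s fv om + cf (cnj om) w *s fv (cnj om))"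
    using expand_n[OF assms] by simp
  also have "\<dots> = (cf 1 w) *s fv 1 + (cf om w * om) *s fv om + (cf (cnj om) w * cnj om) *s fv (cnj om)"
    by (simp add: Pm_add Pm_scale Pm_fv roots_def)
  finally show ?thesis .
qed

lemma F_unitary:
  assumes herm: "hermitian_ip h" and F: "Fh h" and w: "w$I1 = 0" and w': "w'$I1 = 0"
  shows "h (Pm w) (Pm w') = h w w'"
proof -
  note hs = h_simps[OF herm]
  have F1: "h (fv 1) (fv om) = 0" "h (fv 1) (fv (cnj om)) = 0" "h (fv om) (fv (cnj om)) = 0"
    using F by (auto simp: Fh_def)
  have F2: "h (fv om) (fv 1) = 0" "h (fv (cnj om)) (fv 1) = 0" "h (fv (cnj om)) (fv om) = 0"
    using F1 h_cnj[OF herm] by (metis complex_cnj_zero)+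
  define A where "A = cf 1 w *s fv 1 + cf om w *s fv om + cf (cnj om) w *s fv (cnj om)"
  define A' where "A' = cf 1 w' *s fv 1 + cf om w' *s fv om + cf (cnj om) w' *s fv (cnj om)"
  have eqw: "w = A" unfolding A_def by (rule expand_n[OF w])
  have eqw': "w' = A'" unfolding A'_def by (rule expand_n[OF w'])
  have "h (Pm w) (Pm w') = cf 1 w * cnj (cf 1 w') * h (fv 1) (fv 1)
      + cf om w * cnj (cf om w') * (om * cnj om) * h (fv om) (fv om)
      + cf (cnj om) w * cnj (cf (cnj om) w') * (cnj om * om) * h (fv (cnj om)) (fv (cnj om))"
    unfolding Pm_expand[OF w] Pm_expand[OF w'] by (simp add: hs F1 F2 algebra_simps)
  also have "\<dots> = h A A'"
    unfolding A_def A'_def by (simp add: hs F1 F2 om_cnj cnj_om_om algebra_simps)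
  also have "\<dots> = h w w'" using eqw eqw' by simp
  finally show ?thesis .
qed

context hframe
begin

lemma Ti_fv_n: "Ti (fv \<mu>) $ I1 = 0"
  by (simp add: TiT_def n_perp)

lemma eig: assumes "\<mu> \<in> roots" shows "Mv m (Ti (fv \<mu>)) = (a1 * \<mu>) *s Ti (fv \<mu>)"
proof -
  have "T (Mv m (Ti (fv \<mu>))) = a1 *s Pm (fv \<mu>)"
    using np_id[OF Ti_fv_n[of \<mu>]] by (simp add: TMv inv2)
  also have "\<dots> = T ((a1 * \<mu>) *s Ti (fv \<mu>))"
    by (simp add: Pm_fv[OF assms] cl_scale[OF TT_cl] inv2)
  finally show ?thesis using TT_inj by (simp add: inj_eq)
qed

lemma sol_imp_F:
  assumes "expanding_alg_soliton br_g4 h"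
  shows "Fh h"
proof -
  have sol: "expanding_alg_soliton (brM m) std" using assms sol_iff by simp
  have N: "\<And>x. Mv m (Mh m x) = Mh m (Mv m x)"
    by (rule cubeM.sol_imp_normal[OF cube_inst sol])
  have orth_f: "h (fv \<mu>) (fv \<nu>) = 0" if "\<mu> \<in> roots" "\<nu> \<in> roots" "\<mu> \<noteq> \<nu>" for \<mu> \<nu>
  proof -
    have "a1 * \<mu> \<noteq> a1 * \<nu>" using that E1 by simp
    then have "std (Ti (fv \<mu>)) (Ti (fv \<nu>)) = 0"
      by (rule normal_eig_orth[OF N eig[OF that(1)] eig[OF that(2)]])
    then show ?thesis using hT[of "Ti (fv \<mu>)" "Ti (fv \<nu>)"] by (simp add: inv2)
  qed
  show ?thesis unfolding Fh_def
    using orth_f[of 1 om] orth_f[of 1 "cnj om"] orth_f[of om "cnj om"]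
    by (simp add: roots_def om_ne1 cnj_om_ne1 om_ne_cnj eq_commute[of 1])
qed

lemma F_imp_sol:
  assumes F: "Fh h"
  shows "expanding_alg_soliton br_g4 h"
proof -
  have U: "std (Mv m x) (Mv m y) = a1 * cnj a1 * std (np x) (np y)" for x y
  proof -
    have "std (Mv m x) (Mv m y) = h (T (Mv m x)) (T (Mv m y))" by (simp add: hT)
    also have "\<dots> = a1 * cnj a1 * h (Pm (T (np x))) (Pm (T (np y)))" by (simp add: TMv hs)
    also have "\<dots> = a1 * cnj a1 * h (T (np x)) (T (np y))"
      by (simp add: F_unitary[OF herm F] TT_I1 np_def)
    finally show ?thesis by (simp add: hT)
  qed
  have MM: "Mh m (Mv m x) = complex_of_real ((cmod a1)^2) *s np x" for x
  proof (rule std_eqI)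
    fix y
    have "std (Mh m (Mv m x)) y = cnj (std y (Mh m (Mv m x)))" by (rule std_cnj)
    also have "\<dots> = cnj (std (Mv m y) (Mv m x))" by (simp add: std_Mv)
    also have "\<dots> = a1 * cnj a1 * std (np x) (np y)" by (simp add: U std_cnj[of "np x"])
    also have "\<dots> = std (complex_of_real ((cmod a1)^2) *s np x) y"
    proof -
      have na: "(complex_of_real (cmod a1))^2 = a1 * cnj a1" using complex_norm_square[of a1] by simp
      show ?thesis by (simp add: std_scale_left na std_def np_def algebra_simps)
    qed
    finally show "std (Mh m (Mv m x)) y = std (complex_of_real ((cmod a1)^2) *s np x) y" .
  qed
  have r: "(cmod a1)^2 > 0" using E1 by simp
  have "expanding_alg_soliton (brM m) std"
    by (rule cubeM.unitary_imp_sol[OF cube_inst r MM])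
  then show ?thesis using sol_iff by simp
qed

end

theorem sol_iff_F:
  assumes herm: "hermitian_ip h"
  shows "expanding_alg_soliton br_g4 h \<longleftrightarrow> Fh h"
proof -
  obtain E where "\<forall>i j. h (E i) (E j) = (if i = j then 1 else 0)" "\<forall>k. k \<noteq> I1 \<longrightarrow> E k $ I1 = 0" "E I1 $ I1 \<noteq> 0"
    using frame_exists[OF herm] by blast
  then interpret hframe h E by unfold_locales (auto simp: herm)
  show ?thesis using sol_imp_F F_imp_sol by blast
qed




section \<open>Part B: homothetic normal forms\<close>

lemma n_decomp: "u$I1 = 0 \<Longrightarrow> u = u$I2 *s Zb I2 + u$I3 *s Zb I3 + u$I4 *s Zb I4"
  by (simp add: vec_eq_idx4 Zb_def axis_nth_idx4)

lemma Pm_decomp: "u$I1 = 0 \<Longrightarrow> Pm u = u$I4 *s Zb I2 + u$I2 *s Zb I3 + u$I3 *s Zb I4"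
  by (simp add: vec_eq_idx4 Zb_def axis_nth_idx4)

lemma nice_unitary:
  assumes herm: "hermitian_ip g"
    and n1: "g (Zb I2) (Zb I2) = g (Zb I3) (Zb I3)" and n2: "g (Zb I3) (Zb I3) = g (Zb I4) (Zb I4)"
    and o1: "g (Zb I2) (Zb I3) = 0" and o2: "g (Zb I2) (Zb I4) = 0" and o3: "g (Zb I3) (Zb I4) = 0"
    and u: "u$I1 = 0" and u': "u'$I1 = 0"
  shows "g (Pm u) (Pm u') = g u u'"
proof -
  note hs = h_simps[OF herm]
  have o1': "g (Zb I3) (Zb I2) = 0" using o1 h_cnj[OF herm, of "Zb I3" "Zb I2"] by simp
  have o2': "g (Zb I4) (Zb I2) = 0" using o2 h_cnj[OF herm, of "Zb I4" "Zb I2"] by simp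
  have o3': "g (Zb I4) (Zb I3) = 0" using o3 h_cnj[OF herm, of "Zb I4" "Zb I3"] by simp
  have "g (Pm u) (Pm u') = g (u$I4 *s Zb I2 + u$I2 *s Zb I3 + u$I3 *s Zb I4) (u'$I4 *s Zb I2 + u'$I2 *s Zb I3 + u'$I3 *s Zb I4)"
    using Pm_decomp[OF u] Pm_decomp[OF u'] by simp
  also have "\<dots> = g (u$I2 *s Zb I2 + u$I3 *s Zb I3 + u$I4 *s Zb I4) (u'$I2 *s Zb I2 + u'$I3 *s Zb I3 + u'$I4 *s Zb I4)"
    by (simp add: hs o1 o2 o3 o1' o2' o3' n1 n2 algebra_simps)
  also have "\<dots> = g u u'" using n_decomp[OF u] n_decomp[OF u'] by simp
  finally show ?thesis .
qed

lemma fv_nz: "fv \<mu> \<noteq> 0" by (rule nz_by_comp[of _ I2]) simp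

lemma br_Z1: "br_g4 (Zb I1) Y = Pm Y"
  by (simp add: br_Pm Zb_def axis_nth_idx4 vec_eq_idx4)

lemma n_bracket: "w$I1 = 0 \<Longrightarrow> w = br_g4 (Zb I1) (Pm (Pm w))"
  by (simp add: br_Z1 Pm3 np_id)

lemma RHS_imp_F:
  assumes herm: "hermitian_ip h" and hg: "hermitian_ip g"
    and heq: "homothetically_equivalent br_g4 h g"
    and n1: "g (Zb I2) (Zb I2) = g (Zb I3) (Zb I3)" and n2: "g (Zb I3) (Zb I3) = g (Zb I4) (Zb I4)"
    and o1: "g (Zb I2) (Zb I3) = 0" and o2: "g (Zb I2) (Zb I4) = 0" and o3: "g (Zb I3) (Zb I4) = 0"
  shows "Fh h"
proof -
  obtain k \<phi> where k: "k > 0" and aut: "lie_automorphism br_g4 \<phi>"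
    and hk: "\<And>X Y. h X Y = complex_of_real k * g (\<phi> X) (\<phi> Y)"
    using heq unfolding homothetically_equivalent_def by blast
  have bij: "bij \<phi>" and cl: "complex_linear \<phi>" and brp: "\<And>X Y. \<phi> (br_g4 X Y) = br_g4 (\<phi> X) (\<phi> Y)"
    using aut unfolding lie_automorphism_def by blast+
  note gs = h_simps[OF hg]
  define a where "a = \<phi> (Zb I1) $ I1"
  have phin: "\<phi> w $ I1 = 0" if "w$I1 = 0" for w
  proof -
    have "\<phi> w = br_g4 (\<phi> (Zb I1)) (\<phi> (Pm (Pm w)))" using n_bracket[OF that] brp by metis
    then show ?thesis by (simp add: br_g4_def)
  qed
  have phiPm: "\<phi> (Pm w) = a *s Pm (\<phi> w)" if "w$I1 = 0" for w
  proof -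
    have "\<phi> (Pm w) = \<phi> (br_g4 (Zb I1) w)" by (simp add: br_Z1)
    also have "\<dots> = a *s Pm (\<phi> w)" by (simp only: brp) (simp add: br_Pm phin[OF that] a_def)
    finally show ?thesis .
  qed
  have ef: "a *s Pm (\<phi> (fv \<mu>)) = \<mu> *s \<phi> (fv \<mu>)" if "\<mu> \<in> roots" for \<mu>
    using phiPm[of "fv \<mu>"] Pm_fv[OF that] cl_scale[OF cl] by simp
  define G where "G \<mu> \<nu> = g (\<phi> (fv \<mu>)) (\<phi> (fv \<nu>))" for \<mu> \<nu>
  have key: "(a * cnj a - \<mu> * cnj \<nu>) * G \<mu> \<nu> = 0" if "\<mu> \<in> roots" "\<nu> \<in> roots" for \<mu> \<nu>
  proof -
    have "g (a *s Pm (\<phi> (fv \<mu>))) (a *s Pm (\<phi> (fv \<nu>))) = a * cnj a * G \<mu> \<nu>"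
      by (simp add: gs G_def nice_unitary[OF hg n1 n2 o1 o2 o3] phin)
    moreover have "g (a *s Pm (\<phi> (fv \<mu>))) (a *s Pm (\<phi> (fv \<nu>))) = \<mu> * cnj \<nu> * G \<mu> \<nu>"
      by (simp add: ef that gs G_def)
    ultimately have "a * cnj a * G \<mu> \<nu> = \<mu> * cnj \<nu> * G \<mu> \<nu>" by metis
    then show ?thesis by (simp only: left_diff_distrib) simp
  qed
  have inj: "inj \<phi>" using bij bij_is_inj by blast
  have phi0: "\<phi> 0 = 0" by (rule cl_zero[OF cl])
  have G11: "G 1 1 \<noteq> 0"
  proof -
    have "\<phi> (fv 1) \<noteq> 0" using inj fv_nz phi0 by (metis injD)
    then have "Re (G 1 1) > 0" unfolding G_def by (rule h_pos[OF hg])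
    then show ?thesis by auto
  qed
  have aa: "a * cnj a = 1" using key[of 1 1] G11 by (simp add: roots_def)
  have z: "G \<mu> \<nu> = 0" if "\<mu> \<in> roots" "\<nu> \<in> roots" "\<mu> * cnj \<nu> \<noteq> 1" for \<mu> \<nu>
    using key[OF that(1,2)] that(3) by (simp add: aa)
  show ?thesis unfolding Fh_def
    using z[of 1 om] z[of 1 "cnj om"] z[of om "cnj om"]
    by (simp add: hk G_def roots_def om_ne1 cnj_om_ne1 om_sq om_ne_cnj[symmetric])
qed

lemma om_c: "cnj om = - 1 - om" by (simp add: om_def complex_eq_iff)
lemma om_s: "om * om = - 1 - om" using om_sq om_c by simp
lemma om_s': "om * (om * z) = (- 1 - om) * z" using om_s by (simp add: mult.assoc[symmetric])

lemma cf_add: "cf \<mu> (x + y) = cf \<mu> x + cf \<mu> y" by (simp add: cf_def field_simps)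
lemma cf_scale: "cf \<mu> (c *s x) = c * cf \<mu> x" by (simp add: cf_def field_simps)
lemma cf_Z1: "cf \<mu> (Zb I1) = 0" by (simp add: cf_def Zb_def axis_nth_idx4)
lemma cf_fv:
  "cf 1 (fv 1) = 1" "cf 1 (fv om) = 0" "cf 1 (fv (cnj om)) = 0"
  "cf om (fv 1) = 0" "cf om (fv om) = 1" "cf om (fv (cnj om)) = 0"
  "cf (cnj om) (fv 1) = 0" "cf (cnj om) (fv om) = 0" "cf (cnj om) (fv (cnj om)) = 1"
  by (simp_all add: cf_def om_c om_s om_s' field_simps)
lemma cf_Pm: "\<mu> \<in> roots \<Longrightarrow> cf \<mu> (Pm Y) = \<mu> * cf \<mu> Y"
  using root_props[of \<mu>] by (simp add: cf_def field_simps mult.assoc[symmetric])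
lemma Pm_Z1: "Pm (Zb I1) = 0" by (simp add: vec_eq_idx4 Zb_def axis_nth_idx4)
lemma Z1_I1: "Zb I1 $ I1 = 1" by (simp add: Zb_def)

lemma expand_all: "w = w$I1 *s Zb I1 + cf 1 w *s fv 1 + cf om w *s fv om + cf (cnj om) w *s fv (cnj om)"
proof -
  have "np w = cf 1 (np w) *s fv 1 + cf om (np w) *s fv om + cf (cnj om) (np w) *s fv (cnj om)"
    by (rule expand_n) (simp add: np_def)
  moreover have "cf \<mu> (np w) = cf \<mu> w" for \<mu> by (simp add: cf_def np_def)
  moreover have "w = w$I1 *s Zb I1 + np w" by (simp add: vec_eq_idx4 np_def Zb_def axis_nth_idx4)
  ultimately show ?thesis by (simp add: add.assoc)
qed

definition sc :: "(idx4 cvec \<Rightarrow> idx4 cvec \<Rightarrow> complex) \<Rightarrow> complex \<Rightarrow> complex" where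
  "sc h \<mu> = complex_of_real (1 / sqrt (Re (h (fv \<mu>) (fv \<mu>))))"

definition psi :: "(idx4 cvec \<Rightarrow> idx4 cvec \<Rightarrow> complex) \<Rightarrow> idx4 cvec \<Rightarrow> idx4 cvec" where
  "psi h w = w$I1 *s Zb I1 + (sc h 1 * cf 1 w) *s fv 1 + (sc h om * cf om w) *s fv om
     + (sc h (cnj om) * cf (cnj om) w) *s fv (cnj om)"
definition phi :: "(idx4 cvec \<Rightarrow> idx4 cvec \<Rightarrow> complex) \<Rightarrow> idx4 cvec \<Rightarrow> idx4 cvec" where
  "phi h w = w$I1 *s Zb I1 + (cf 1 w / sc h 1) *s fv 1 + (cf om w / sc h om) *s fv om
     + (cf (cnj om) w / sc h (cnj om)) *s fv (cnj om)"

context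
  fixes h :: "idx4 cvec \<Rightarrow> idx4 cvec \<Rightarrow> complex"
  assumes herm: "hermitian_ip h" and F: "Fh h"
begin

lemma sc_props: "sc h \<mu> \<noteq> 0 \<and> sc h \<mu> * cnj (sc h \<mu>) * h (fv \<mu>) (fv \<mu>) = 1"
proof -
  define r where "r = Re (h (fv \<mu>) (fv \<mu>))"
  have r0: "r > 0" unfolding r_def by (rule h_pos[OF herm fv_nz])
  have hf: "h (fv \<mu>) (fv \<mu>) = complex_of_real r" unfolding r_def by (rule h_real[OF herm])
  have sc_r: "sc h \<mu> = complex_of_real (1 / sqrt r)" by (simp add: sc_def r_def)
  have "sc h \<mu> * cnj (sc h \<mu>) * h (fv \<mu>) (fv \<mu>) = complex_of_real (1 / sqrt r * (1 / sqrt r) * r)"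
    unfolding sc_r hf by (simp only: complex_cnj_complex_of_real of_real_mult)
  also have "\<dots> = 1" using r0 by (simp add: real_sqrt_mult[symmetric])
  finally show ?thesis using r0 by (simp add: sc_r)
qed

lemma sc_nz: "sc h \<mu> \<noteq> 0" using sc_props by blast

lemma psi_I1: "psi h w $ I1 = w $ I1" by (simp add: psi_def Z1_I1)
lemma phi_I1: "phi h w $ I1 = w $ I1" by (simp add: phi_def Z1_I1)

lemma cf_psi: "cf 1 (psi h w) = sc h 1 * cf 1 w" "cf om (psi h w) = sc h om * cf om w"
   "cf (cnj om) (psi h w) = sc h (cnj om) * cf (cnj om) w"
  by (simp_all add: psi_def cf_add cf_scale cf_Z1 cf_fv)
lemma cf_phi: "cf 1 (phi h w) = cf 1 w / sc h 1" "cf om (phi h w) = cf om w / sc h om"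
   "cf (cnj om) (phi h w) = cf (cnj om) w / sc h (cnj om)"
  by (simp_all add: phi_def cf_add cf_scale cf_Z1 cf_fv)

lemma phi_psi: "phi h (psi h w) = w"
proof -
  have "phi h (psi h w) = w$I1 *s Zb I1 + cf 1 w *s fv 1 + cf om w *s fv om + cf (cnj om) w *s fv (cnj om)"
    unfolding phi_def[of h "psi h w"] psi_I1 cf_psi using sc_nz by simp
  then show ?thesis using expand_all[of w] by simp
qed

lemma psi_phi: "psi h (phi h w) = w"
proof -
  have "psi h (phi h w) = w$I1 *s Zb I1 + cf 1 w *s fv 1 + cf om w *s fv om + cf (cnj om) w *s fv (cnj om)"
    unfolding psi_def[of h "phi h w"] phi_I1 cf_phi using sc_nz by simp
  then show ?thesis using expand_all[of w] by simp
qed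

lemma psi_cl: "complex_linear (psi h)"
  unfolding complex_linear_def psi_def
  by (simp add: cf_add cf_scale algebra_simps vector_add_divide_simps(1) scaleR_add_left)

lemma phi_cl: "complex_linear (phi h)"
  unfolding complex_linear_def
  by (metis psi_phi phi_psi cl_add[OF psi_cl] cl_scale[OF psi_cl])

lemma phi_Pm: "phi h (Pm Y) = Pm (phi h Y)"
  unfolding phi_def
  by (simp add: Pm_add Pm_scale Pm_Z1 Pm_fv roots_def cf_Pm mult.commute)

lemma phi_aut: "lie_automorphism br_g4 (phi h)"
  unfolding lie_automorphism_def
proof (intro conjI allI)
  show "bij (phi h)"
    by (rule o_bij[of "psi h"]) (simp_all add: fun_eq_iff phi_psi psi_phi)
  show "complex_linear (phi h)" by (rule phi_cl)
  fix X Y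
  show "phi h (br_g4 X Y) = br_g4 (phi h X) (phi h Y)"
    by (simp add: br_Pm cl_diff[OF phi_cl] cl_scale[OF phi_cl] phi_Pm phi_I1)
qed

definition gg where "gg X Y = h (psi h X) (psi h Y)"

lemma gg_herm: "hermitian_ip gg"
  unfolding hermitian_ip_def gg_def
proof (intro conjI allI impI)
  fix X Y Z show "h (psi h (X + Y)) (psi h Z) = h (psi h X) (psi h Z) + h (psi h Y) (psi h Z)"
    by (simp add: cl_add[OF psi_cl] h_add_l[OF herm])
next
  fix a X Y show "h (psi h (a *s X)) (psi h Y) = a * h (psi h X) (psi h Y)"
    by (simp add: cl_scale[OF psi_cl] h_scale_l[OF herm])
next
  fix X Y show "h (psi h Y) (psi h X) = cnj (h (psi h X) (psi h Y))"
    by (rule h_cnj[OF herm])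
next
  fix X :: "idx4 cvec" assume "X \<noteq> 0"
  then have "psi h X \<noteq> 0" by (metis phi_psi cl_zero[OF phi_cl])
  then show "Re (h (psi h X) (psi h X)) > 0" by (rule h_pos[OF herm])
qed

lemma gg_equiv: "homothetically_equivalent br_g4 h gg"
  unfolding homothetically_equivalent_def
  by (rule exI[of _ 1], rule exI[of _ "phi h"]) (simp add: phi_aut gg_def psi_phi)

lemma psi_n: "w$I1 = 0 \<Longrightarrow> psi h w = (sc h 1 * cf 1 w) *s fv 1 + (sc h om * cf om w) *s fv om
     + (sc h (cnj om) * cf (cnj om) w) *s fv (cnj om)"
  by (simp add: psi_def)

lemma gram:
  assumes "u$I1 = 0" "v$I1 = 0"
  shows "gg u v = cf 1 u * cnj (cf 1 v) + cf om u * cnj (cf om v) + cf (cnj om) u * cnj (cf (cnj om) v)"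
proof -
  note hs = h_simps[OF herm]
  have F1: "h (fv 1) (fv om) = 0" "h (fv 1) (fv (cnj om)) = 0" "h (fv om) (fv (cnj om)) = 0"
    using F by (auto simp: Fh_def)
  have F2: "h (fv om) (fv 1) = 0" "h (fv (cnj om)) (fv 1) = 0" "h (fv (cnj om)) (fv om) = 0"
    using F1 h_cnj[OF herm] by (metis complex_cnj_zero)+
  have d: "sc h \<mu> * cnj (sc h \<mu>) * h (fv \<mu>) (fv \<mu>) = 1" for \<mu> using sc_props by blast
  have "gg u v = cf 1 u * cnj (cf 1 v) * (sc h 1 * cnj (sc h 1) * h (fv 1) (fv 1))
     + cf om u * cnj (cf om v) * (sc h om * cnj (sc h om) * h (fv om) (fv om))
     + cf (cnj om) u * cnj (cf (cnj om) v) * (sc h (cnj om) * cnj (sc h (cnj om)) * h (fv (cnj om)) (fv (cnj om)))"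
    unfolding gg_def psi_n[OF assms(1)] psi_n[OF assms(2)] by (simp add: hs F1 F2 algebra_simps)
  then show ?thesis by (simp add: d)
qed

lemma ZbI1: "Zb k $ I1 = 0" if "k \<noteq> I1" for k using that by (simp add: Zb_def axis_nth_idx4)

lemma cfZ: "cf \<mu> (Zb I2) = 1/3" "cf \<mu> (Zb I3) = \<mu>/3" "cf \<mu> (Zb I4) = cnj \<mu>/3"
  by (simp_all add: cf_def Zb_def axis_nth_idx4)

lemma gg_nice:
  "gg (Zb I2) (Zb I2) = gg (Zb I3) (Zb I3) \<and> gg (Zb I3) (Zb I3) = gg (Zb I4) (Zb I4) \<and>
   gg (Zb I2) (Zb I3) = 0 \<and> gg (Zb I2) (Zb I4) = 0 \<and> gg (Zb I3) (Zb I4) = 0"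
  by (simp add: gram ZbI1 cfZ om_cnj cnj_om_om om_c om_s om_s' field_simps)

end

theorem F_imp_RHS:
  assumes herm: "hermitian_ip h" and F: "Fh h"
  shows "\<exists>g. hermitian_ip g \<and> homothetically_equivalent br_g4 h g \<and>
       g (Zb I2) (Zb I2) = g (Zb I3) (Zb I3) \<and> g (Zb I3) (Zb I3) = g (Zb I4) (Zb I4) \<and>
       g (Zb I2) (Zb I3) = 0 \<and> g (Zb I2) (Zb I4) = 0 \<and> g (Zb I3) (Zb I4) = 0"
  using gg_herm[OF herm F] gg_equiv[OF herm F] gg_nice[OF herm F] by blast

theorem proposition4p3:
  fixes h :: "idx4 cvec \<Rightarrow> idx4 cvec \<Rightarrow> complex"
  assumes "hermitian_ip h"
  shows "expanding_alg_soliton br_g4 h \<longleftrightarrow>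
    (\<exists>g. hermitian_ip g \<and> homothetically_equivalent br_g4 h g \<and>
       g (Zb I2) (Zb I2) = g (Zb I3) (Zb I3) \<and> g (Zb I3) (Zb I3) = g (Zb I4) (Zb I4) \<and>
       g (Zb I2) (Zb I3) = 0 \<and> g (Zb I2) (Zb I4) = 0 \<and> g (Zb I3) (Zb I4) = 0)"
proof
  assume "expanding_alg_soliton br_g4 h"
  then have "Fh h" using sol_iff_F[OF assms] by simp
  then show "\<exists>g. hermitian_ip g \<and> homothetically_equivalent br_g4 h g \<and>
       g (Zb I2) (Zb I2) = g (Zb I3) (Zb I3) \<and> g (Zb I3) (Zb I3) = g (Zb I4) (Zb I4) \<and>
       g (Zb I2) (Zb I3) = 0 \<and> g (Zb I2) (Zb I4) = 0 \<and> g (Zb I3) (Zb I4) = 0"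
    by (rule F_imp_RHS[OF assms])
next
  assume "\<exists>g. hermitian_ip g \<and> homothetically_equivalent br_g4 h g \<and>
       g (Zb I2) (Zb I2) = g (Zb I3) (Zb I3) \<and> g (Zb I3) (Zb I3) = g (Zb I4) (Zb I4) \<and>
       g (Zb I2) (Zb I3) = 0 \<and> g (Zb I2) (Zb I4) = 0 \<and> g (Zb I3) (Zb I4) = 0"
  then have "Fh h" using RHS_imp_F[OF assms] by blast
  then show "expanding_alg_soliton br_g4 h" using sol_iff_F[OF assms] by simp
qed


end
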